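(* Assume $d_{min}\ge d_{close}+d_{open}$, and let $R$ be a regular run whose initial state has Dir = open and GateStatus = opened. (1) If the positive significant moments of Dir form an infinite sequence $\gamma_1<\gamma_2<\gamma_3<\cdots$, then the positive significant moments of GateStatus form an infinite sequence $\delta_1<\delta_2<\delta_3<\cdots$ with $\delta_i\in(\gamma_i,\gamma_{i+1})$ for every $i$. (2) If the positive significant moments of Dir form a finite sequence $\gamma_1<\cdots<\gamma_n$, then the positive significant moments of GateStatus form a sequence $\delta_1<\cdots<\delta_n$ with $\delta_i\in(\gamma_i,\gamma_{i+1})$ for $i<n$ and $\delta_n>\gamma_n$.
   Context: Setting (evolving algebra for the railroad crossing). States are structures over a vocabulary containing: a finite universe Tracks; the reals and ExtendedReals $=\mathbb{R}\cup\{\infty\}$ with standard $<$ and $+$ ($\infty$ largest); a nullary real-valued symbol $\mathrm{CT}$ (current time); positive real constants $d_{close},d_{open},d_{min},d_{max}$ with $d_{close}<d_{min}\le d_{max}$; a unary function TrackStatus from Tracks to $\{\text{empty},\text{coming},\text{incrossing}\}$; a unary function Deadline from Tracks to ExtendedReals; a nullary Dir with values in $\{\text{open},\text{close}\}$; a nullary GateStatus with values in $\{\text{opened},\text{closed}\}$. Put $W=d_{min}-d_{close}$ and $\Delta_{close}=d_{close}+(d_{max}-d_{min})=d_{max}-W$. For a track $x$, $s(x)$ is the condition [$\mathrm{TrackStatus}(x)=\text{empty}$ or $\mathrm{CT}+d_{open}<\mathrm{Deadline}(x)$], and SafeToOpen is $\forall x\in\mathrm{Tracks}\ s(x)$. The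 program has two modules (agents). Gate: simultaneously OpenGate "if Dir=open then GateStatus:=opened" and CloseGate "if Dir=close then GateStatus:=closed". Controller: simultaneously, for every track $x$, SetDeadline$(x)$ "if TrackStatus$(x)$=coming and Deadline$(x)=\infty$ then Deadline$(x):=\mathrm{CT}+W$", SignalClose$(x)$ "if $\mathrm{CT}=$Deadline$(x)$ then Dir:=close", ClearDeadline$(x)$ "if TrackStatus$(x)$=empty and Deadline$(x)<\infty$ then Deadline$(x):=\infty$", together with SignalOpen "if Dir=close and SafeToOpen then Dir:=open". Executing a module means computing all updates it generates in the current state and performing them simultaneously (nothing happens if the update set is inconsistent). A module is enabled at a state if its update set is consistent and contains an update that changes the state. TrackStatus is external (changed only by the environment); Deadline, Dir, GateStatus are internal (changed only by the modules); other symbols are static. Runs: for $t\mapsto R(t)$, $t\in[0,\infty)$, let $\rho(t)$ be the reduct of $R(t)$ without CT. $R$ is a pre-run if all $R(t)$ share a superuniverse, $\mathrm{CT}=t$ in $R(t)$, and for every $\tau>0$ there are $0=t_0<\dots<t_n=\tau$ with $\rho$ constant on each $(t_i,t_{i+1})$. For a term $e$ (free variables fixed), $e_t$ is its value in $R(t)$, $e_{t+}$ (resp. $e_{t-}$, $t>0$) its constant value on some $(t,t+\epsilon)$ (resp. $(t-\epsilon,t)$); likewise $\rho(t\pm)$. $e$ holds over an interval if it holds at each point; $e$ becomes (is set to) $a$ at $t$ if $e_{t-}\ne a=e_t$ or $e_t\neq a=e_{t+}$. A moment $t$ is significant for $e$ if every neighbourhood of $t$ contains a moment $a$ with $e_a\ne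 e_t$; positive significant moments are those $>0$. A pre-run is a run if (i) whenever $\rho(t+)\neq\rho(t)$, $\rho(t+)$ is the CT-free reduct of the result of executing some modules at $R(t)$ (these agents fire at $t$), with external functions equal in $\rho(t)$ and $\rho(t+)$; (ii) whenever $t>0$ and $\rho(t)\ne\rho(t-)$, they differ only in external functions. An agent is immediate if it fires at every moment it is enabled; bounded if immediate or there is $b>0$ with no interval $(t,t+b)$ over which it is enabled but never fires. Initial states: TrackStatus$(x)$=empty and Deadline$(x)=\infty$ for every track $x$. A regular run is a run $R$ with $R(0)$ initial such that: (Train Motion) for each track $x$ there is a finite or infinite sequence $0=t_0<t_1<t_2<\cdots$ (the significant moments of $x$) with TrackStatus$(x)$=empty over each $[t_{3i},t_{3i+1})$, =coming over each $[t_{3i+1},t_{3i+2})$ where $d_{min}\le t_{3i+2}-t_{3i+1}\le d_{max}$, =incrossing over each $[t_{3i+2},t_{3i+3})$, and, if the sequence is finite with last element $t_k$, then $3\mid k$ and TrackStatus$(x)$=empty over $[t_k,\infty)$; (Controller Timing) Controller is immediate; (Gate Timing) Gate is bounded, there is no interval $(t,t+d_{close})$ over which Dir=close and GateStatus=opened both hold, and no interval $(t,t+d_{open})$ over which Dir=open and GateStatus=closed both hold. *)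

theory Defs
  imports Main "HOL-Library.Extended_Real" "HOL-Library.FuncSet"
begin

datatype tstat = Empty | Coming | Incrossing
datatype dirv = DOpen | DClose
datatype gstat = Opened | Closed
datatype agent = Gate | Controller

text \<open>CT-free reduct of a state. Only the values on the universe Tracks are meaningful;
  run states are built with restrict, so values outside Tracks are undefined.\<close>
record 'tr st =
  ts :: "'tr \<Rightarrow> tstat"
  dl :: "'tr \<Rightarrow> ereal"
  dir :: dirv
  gate :: gstat

datatype 'tr upd = UDL 'tr ereal | UDir dirv | UGate gstat
datatype 'tr location = LDL 'tr | LDir | LGate

fun loc :: "'tr upd \<Rightarrow> 'tr location" where
  "loc (UDL x v) = LDL x" | "loc (UDir v) = LDir" | "loc (UGate v) = LGate"

definition consistent :: "'tr upd set \<Rightarrow> bool" where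
  "consistent U \<longleftrightarrow> (\<forall>u\<in>U. \<forall>v\<in>U. loc u = loc v \<longrightarrow> u = v)"

fun changes :: "'tr upd \<Rightarrow> 'tr st \<Rightarrow> bool" where
  "changes (UDL x v) s = (dl s x \<noteq> v)"
| "changes (UDir v) s = (dir s \<noteq> v)"
| "changes (UGate v) s = (gate s \<noteq> v)"

definition apply_upd :: "'tr upd set \<Rightarrow> 'tr st \<Rightarrow> 'tr st" where
  "apply_upd U s = s\<lparr> dl := (\<lambda>x. if \<exists>v. UDL x v \<in> U then (THE v. UDL x v \<in> U) else dl s x),
                      dir := (if \<exists>v. UDir v \<in> U then (THE v. UDir v \<in> U) else dir s),
                      gate := (if \<exists>v. UGate v \<in> U then (THE v. UGate v \<in> U) else gate s) \<rparr>"

definition safe_to_open :: "'tr set \<Rightarrow> real \<Rightarrow> real \<Rightarrow> 'tr st \<Rightarrow> bool" where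
  "safe_to_open Tracks dopen t s \<longleftrightarrow>
     (\<forall>x\<in>Tracks. ts s x = Empty \<or> ereal (t + dopen) < dl s x)"

text \<open>Update set generated by a module at the state s with CT = t.
  W = dmin - dclose.\<close>
fun upds :: "'tr set \<Rightarrow> real \<Rightarrow> real \<Rightarrow> real \<Rightarrow> agent \<Rightarrow> real \<Rightarrow> 'tr st \<Rightarrow> 'tr upd set" where
  "upds Tracks dclose dopen dmin Gate t s =
     (if dir s = DOpen then {UGate Opened} else {}) \<union>
     (if dir s = DClose then {UGate Closed} else {})"
| "upds Tracks dclose dopen dmin Controller t s =
     (\<Union>x\<in>Tracks.
        (if ts s x = Coming \<and> dl s x = \<infinity> then {UDL x (ereal (t + (dmin - dclose)))} else {}) \<union>
        (if ereal t = dl s x then {UDir DClose} else {}) \<union>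
        (if ts s x = Empty \<and> dl s x < \<infinity> then {UDL x \<infinity>} else {}))
     \<union> (if dir s = DClose \<and> safe_to_open Tracks dopen t s then {UDir DOpen} else {})"

definition enabled :: "'tr set \<Rightarrow> real \<Rightarrow> real \<Rightarrow> real \<Rightarrow> agent \<Rightarrow> real \<Rightarrow> 'tr st \<Rightarrow> bool" where
  "enabled Tracks dclose dopen dmin A t s \<longleftrightarrow>
     consistent (upds Tracks dclose dopen dmin A t s) \<and>
     (\<exists>u\<in>upds Tracks dclose dopen dmin A t s. changes u s)"

definition exec :: "'tr set \<Rightarrow> real \<Rightarrow> real \<Rightarrow> real \<Rightarrow> agent set \<Rightarrow> real \<Rightarrow> 'tr st \<Rightarrow> 'tr st" where
  "exec Tracks dclose dopen dmin M t s =
     apply_upd (\<Union>A\<in>M. if consistent (upds Tracks dclose dopen dmin A t s)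
                        then upds Tracks dclose dopen dmin A t s else {}) s"

definition rho :: "'tr set \<Rightarrow> (real \<Rightarrow> 'tr \<Rightarrow> tstat) \<Rightarrow> (real \<Rightarrow> 'tr \<Rightarrow> ereal) \<Rightarrow>
                   (real \<Rightarrow> dirv) \<Rightarrow> (real \<Rightarrow> gstat) \<Rightarrow> real \<Rightarrow> 'tr st" where
  "rho Tracks TS DL Di GS t =
     \<lparr> ts = restrict (TS t) Tracks, dl = restrict (DL t) Tracks, dir = Di t, gate = GS t \<rparr>"

definition right_val :: "(real \<Rightarrow> 'b) \<Rightarrow> real \<Rightarrow> 'b \<Rightarrow> bool" where
  "right_val f t v \<longleftrightarrow> (\<exists>\<epsilon>>0. \<forall>u. t < u \<and> u < t + \<epsilon> \<longrightarrow> f u = v)"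

definition left_val :: "(real \<Rightarrow> 'b) \<Rightarrow> real \<Rightarrow> 'b \<Rightarrow> bool" where
  "left_val f t v \<longleftrightarrow> (\<exists>\<epsilon>>0. \<forall>u. t - \<epsilon> < u \<and> u < t \<longrightarrow> f u = v)"

definition pre_run :: "(real \<Rightarrow> 'b) \<Rightarrow> bool" where
  "pre_run f \<longleftrightarrow> (\<forall>\<tau>>0. \<exists>(n::nat) (tt::nat \<Rightarrow> real). tt 0 = 0 \<and> tt n = \<tau> \<and>
      (\<forall>i<n. tt i < tt (Suc i)) \<and>
      (\<forall>i<n. \<forall>u v. tt i < u \<and> u < tt (Suc i) \<and> tt i < v \<and> v < tt (Suc i) \<longrightarrow> f u = f v))"

definition is_run :: "'tr set \<Rightarrow> real \<Rightarrow> real \<Rightarrow> real \<Rightarrow> (real \<Rightarrow> 'tr \<Rightarrow> tstat) \<Rightarrow>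
     (real \<Rightarrow> 'tr \<Rightarrow> ereal) \<Rightarrow> (real \<Rightarrow> dirv) \<Rightarrow> (real \<Rightarrow> gstat) \<Rightarrow> bool" where
  "is_run Tracks dclose dopen dmin TS DL Di GS \<longleftrightarrow>
     (let r = rho Tracks TS DL Di GS in
       pre_run r \<and>
       (\<forall>t\<ge>0. \<forall>s. right_val r t s \<and> s \<noteq> r t \<longrightarrow>
          (\<exists>M. s = exec Tracks dclose dopen dmin M t (r t)) \<and> ts s = ts (r t)) \<and>
       (\<forall>t>0. \<forall>s. left_val r t s \<and> s \<noteq> r t \<longrightarrow>
          dl s = dl (r t) \<and> dir s = dir (r t) \<and> gate s = gate (r t)))"

definition fires :: "'tr set \<Rightarrow> real \<Rightarrow> real \<Rightarrow> real \<Rightarrow> (real \<Rightarrow> 'tr \<Rightarrow> tstat) \<Rightarrow>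
     (real \<Rightarrow> 'tr \<Rightarrow> ereal) \<Rightarrow> (real \<Rightarrow> dirv) \<Rightarrow> (real \<Rightarrow> gstat) \<Rightarrow> agent \<Rightarrow> real \<Rightarrow> bool" where
  "fires Tracks dclose dopen dmin TS DL Di GS A t \<longleftrightarrow>
     (let r = rho Tracks TS DL Di GS in
       \<exists>s. right_val r t s \<and> s \<noteq> r t \<and>
           (\<exists>M. A \<in> M \<and> s = exec Tracks dclose dopen dmin M t (r t)))"

definition phase_ok :: "(real \<Rightarrow> tstat) \<Rightarrow> real \<Rightarrow> real \<Rightarrow> (nat \<Rightarrow> real) \<Rightarrow> nat \<Rightarrow> bool" where
  "phase_ok f dmin dmax tt i \<longleftrightarrow>
     (\<forall>t. tt (3*i) \<le> t \<and> t < tt (3*i+1) \<longrightarrow> f t = Empty) \<and>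
     (\<forall>t. tt (3*i+1) \<le> t \<and> t < tt (3*i+2) \<longrightarrow> f t = Coming) \<and>
     dmin \<le> tt (3*i+2) - tt (3*i+1) \<and> tt (3*i+2) - tt (3*i+1) \<le> dmax \<and>
     (\<forall>t. tt (3*i+2) \<le> t \<and> t < tt (3*i+3) \<longrightarrow> f t = Incrossing)"

definition train_motion :: "(real \<Rightarrow> tstat) \<Rightarrow> real \<Rightarrow> real \<Rightarrow> bool" where
  "train_motion f dmin dmax \<longleftrightarrow>
     (\<exists>tt::nat \<Rightarrow> real. tt 0 = 0 \<and> strict_mono tt \<and> (\<forall>i. phase_ok f dmin dmax tt i)) \<or>
     (\<exists>(tt::nat \<Rightarrow> real) k. tt 0 = 0 \<and> 3 dvd k \<and> (\<forall>i j. i < j \<and> j \<le> k \<longrightarrow> tt i < tt j) \<and>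
        (\<forall>i. 3*i+3 \<le> k \<longrightarrow> phase_ok f dmin dmax tt i) \<and>
        (\<forall>t\<ge>tt k. f t = Empty))"

definition regular_run :: "'tr set \<Rightarrow> real \<Rightarrow> real \<Rightarrow> real \<Rightarrow> real \<Rightarrow> (real \<Rightarrow> 'tr \<Rightarrow> tstat) \<Rightarrow>
     (real \<Rightarrow> 'tr \<Rightarrow> ereal) \<Rightarrow> (real \<Rightarrow> dirv) \<Rightarrow> (real \<Rightarrow> gstat) \<Rightarrow> bool" where
  "regular_run Tracks dclose dopen dmin dmax TS DL Di GS \<longleftrightarrow>
     (let r = rho Tracks TS DL Di GS;
          en = (\<lambda>A t. enabled Tracks dclose dopen dmin A t (r t));
          fi = fires Tracks dclose dopen dmin TS DL Di GS in
       is_run Tracks dclose dopen dmin TS DL Di GS \<and>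
       (\<forall>x\<in>Tracks. TS 0 x = Empty \<and> DL 0 x = \<infinity>) \<and>
       (\<forall>x\<in>Tracks. train_motion (\<lambda>t. TS t x) dmin dmax) \<and>
       (\<forall>t\<ge>0. en Controller t \<longrightarrow> fi Controller t) \<and>
       ((\<forall>t\<ge>0. en Gate t \<longrightarrow> fi Gate t) \<or>
        (\<exists>b>0. \<not> (\<exists>t\<ge>0. \<forall>u. t < u \<and> u < t + b \<longrightarrow> en Gate u \<and> \<not> fi Gate u))) \<and>
       \<not> (\<exists>t\<ge>0. \<forall>u. t < u \<and> u < t + dclose \<longrightarrow> Di u = DClose \<and> GS u = Opened) \<and>
       \<not> (\<exists>t\<ge>0. \<forall>u. t < u \<and> u < t + dopen \<longrightarrow> Di u = DOpen \<and> GS u = Closed))"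

definition pos_sig :: "(real \<Rightarrow> 'b) \<Rightarrow> real set" where
  "pos_sig f = {t. t > 0 \<and> (\<forall>\<epsilon>>0. \<exists>a\<ge>0. \<bar>a - t\<bar> < \<epsilon> \<and> f a \<noteq> f t)}"

end

theory Submission
  imports Defs
begin

lemma rv_unique:
  assumes "right_val f t v" "right_val f t w" shows "v = w"
proof -
  obtain e1 where e1: "e1>0" "\<forall>u. t<u \<and> u<t+e1 \<longrightarrow> f u = v" using assms(1) unfolding right_val_def by blast
  obtain e2 where e2: "e2>0" "\<forall>u. t<u \<and> u<t+e2 \<longrightarrow> f u = w" using assms(2) unfolding right_val_def by blast
  define u where "u = t + min e1 e2 / 2"
  have "t < u" "u < t + e1" "u < t + e2" using e1 e2 unfolding u_def by auto
  then have "f u = v" "f u = w" using e1 e2 by auto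
  then show ?thesis by simp
qed

lemma rv_map: "right_val f t v \<Longrightarrow> right_val (\<lambda>u. g (f u)) t (g v)"
  unfolding right_val_def by metis

lemma lv_map: "left_val f t v \<Longrightarrow> left_val (\<lambda>u. g (f u)) t (g v)"
  unfolding left_val_def by metis

lemma real_ind:
  fixes a b :: real
  assumes ab: "a \<le> b" and Pa: "P a"
  and R: "\<And>t. a \<le> t \<Longrightarrow> t < b \<Longrightarrow> (\<And>u. a \<le> u \<Longrightarrow> u \<le> t \<Longrightarrow> P u) \<Longrightarrow> \<exists>e>0. \<forall>u. t < u \<and> u < t + e \<longrightarrow> P u"
  and L: "\<And>t. a < t \<Longrightarrow> t \<le> b \<Longrightarrow> (\<And>u. a \<le> u \<Longrightarrow> u < t \<Longrightarrow> P u) \<Longrightarrow> P t"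
  shows "\<And>t. a \<le> t \<Longrightarrow> t \<le> b \<Longrightarrow> P t"
proof -
  define S where "S = {s. a \<le> s \<and> s \<le> b \<and> (\<forall>u. a \<le> u \<and> u \<le> s \<longrightarrow> P u)}"
  have aS: "a \<in> S" using ab Pa unfolding S_def by auto
  have bdd: "bdd_above S" unfolding S_def bdd_above_def by auto
  define sg where "sg = Sup S"
  have asg: "a \<le> sg" unfolding sg_def using aS bdd by (meson cSup_upper)
  have sgb: "sg \<le> b" unfolding sg_def using aS by (intro cSup_least) (auto simp: S_def)
  have below: "P u" if u1: "a \<le> u" and u2: "u < sg" for u
  proof -
    obtain s where "s \<in> S" "u < s" using less_cSup_iff[of S u] u2 aS bdd unfolding sg_def by auto
    then show ?thesis using u1 unfolding S_def by auto
  qed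
  have Psg: "P sg"
  proof (cases "sg = a")
    case True then show ?thesis using Pa by simp
  next
    case False then have "a < sg" using asg by simp
    then show ?thesis using L[OF _ sgb below] by blast
  qed
  have allsg: "P u" if "a \<le> u" "u \<le> sg" for u
    using that below Psg by (cases "u = sg") auto
  have "sg = b"
  proof (rule ccontr)
    assume "sg \<noteq> b"
    then have "sg < b" using sgb by simp
    then obtain e where e: "e > 0" "\<forall>u. sg < u \<and> u < sg + e \<longrightarrow> P u"
      using R[of sg] asg allsg by blast
    define s' where "s' = min b (sg + e/2)"
    have "s' \<in> S" unfolding S_def
    proof (intro CollectI conjI allI impI)
      fix u assume "a \<le> u \<and> u \<le> s'"
      then show "P u" using allsg e unfolding s'_def by (cases "u \<le> sg") auto
    qed (use asg \<open>sg < b\<close> e in \<open>auto simp: s'_def\<close>)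
    then have "s' \<le> sg" unfolding sg_def using bdd by (meson cSup_upper)
    then show False using \<open>sg < b\<close> e unfolding s'_def by auto
  qed
  then show "\<And>t. a \<le> t \<Longrightarrow> t \<le> b \<Longrightarrow> P t" using allsg by auto
qed

lemma const_lemma:
  fixes f :: "real \<Rightarrow> 'b"
  assumes ab: "a \<le> b" and R: "\<And>t. a \<le> t \<Longrightarrow> t < b \<Longrightarrow> right_val f t (f t)"
    and L: "\<And>t. a < t \<Longrightarrow> t \<le> b \<Longrightarrow> left_val f t (f t)"
  shows "\<And>u. a \<le> u \<Longrightarrow> u \<le> b \<Longrightarrow> f u = f a"
proof (rule real_ind[where P="\<lambda>u. f u = f a", OF ab refl])
  fix t assume t: "a \<le> t" "t < b" and IH: "\<And>u. a \<le> u \<Longrightarrow> u \<le> t \<Longrightarrow> f u = f a"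
  obtain e where "e>0" "\<forall>u. t<u \<and> u<t+e \<longrightarrow> f u = f t" using R[OF t] unfolding right_val_def by blast
  then show "\<exists>e>0. \<forall>u. t < u \<and> u < t + e \<longrightarrow> f u = f a" using IH[of t] t by auto
next
  fix t assume t: "a < t" "t \<le> b" and IH: "\<And>u. a \<le> u \<Longrightarrow> u < t \<Longrightarrow> f u = f a"
  obtain e where e: "e>0" "\<forall>u. t-e<u \<and> u<t \<longrightarrow> f u = f t" using L[OF t] unfolding left_val_def by blast
  define u where "u = max a (t - e/2)"
  have "f u = f t" using e t unfolding u_def by auto
  moreover have "f u = f a" using IH[of u] t e unfolding u_def by auto
  ultimately show "f t = f a" by simp
qed

lemma pos_sig_iff:
  fixes f :: "real \<Rightarrow> 'b"
  assumes t: "t > 0" and L: "left_val f t (f t)" and R: "right_val f t v"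
  shows "t \<in> pos_sig f \<longleftrightarrow> v \<noteq> f t"
proof
  assume A: "t \<in> pos_sig f"
  show "v \<noteq> f t"
  proof
    assume v: "v = f t"
    obtain e1 where e1: "e1>0" "\<forall>u. t-e1<u \<and> u<t \<longrightarrow> f u = f t" using L unfolding left_val_def by blast
    obtain e2 where e2: "e2>0" "\<forall>u. t<u \<and> u<t+e2 \<longrightarrow> f u = v" using R unfolding right_val_def by blast
    have "\<forall>\<epsilon>>0. \<exists>a\<ge>0. \<bar>a - t\<bar> < \<epsilon> \<and> f a \<noteq> f t" using A unfolding pos_sig_def by blast
    then obtain a where a: "\<bar>a - t\<bar> < min e1 e2" "f a \<noteq> f t"
      using e1(1) e2(1) by (meson min_less_iff_conj)
    have "a \<noteq> t" using a by auto
    show False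
    proof (cases "a < t")
      case True
      then have "t - e1 < a" using a(1) by linarith
      then show ?thesis using e1(2) True a(2) by blast
    next
      case False
      then have "t < a" "a < t + e2" using a(1) \<open>a \<noteq> t\<close> by linarith+
      then show ?thesis using e2(2) v a(2) by blast
    qed
  qed
next
  assume v: "v \<noteq> f t"
  obtain e2 where e2: "e2>0" "\<forall>u. t<u \<and> u<t+e2 \<longrightarrow> f u = v" using R unfolding right_val_def by blast
  show "t \<in> pos_sig f" unfolding pos_sig_def
  proof (intro CollectI conjI allI impI)
    fix e :: real assume "e > 0"
    define a where "a = t + min e e2 / 2"
    have "a \<ge> 0" "\<bar>a - t\<bar> < e" "f a \<noteq> f t" using t e2 v \<open>e>0\<close> unfolding a_def by auto
    then show "\<exists>a\<ge>0. \<bar>a - t\<bar> < e \<and> f a \<noteq> f t" by blast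
  qed (use t in auto)
qed

fun gm :: "dirv \<Rightarrow> gstat" where "gm DOpen = Opened" | "gm DClose = Closed"

lemma gm_inj: "gm a = gm b \<longleftrightarrow> a = b" by (cases a; cases b) auto

lemma upds_gate: "upds Tr dc do dm Gate t s = {UGate (gm (dir s))}"
  by (cases "dir s") auto

lemma mem_if_single: "(u \<in> (if P then {a} else {})) = (P \<and> u = a)" by simp

lemma mem_UC: "u \<in> upds Tr dc do dm Controller t s \<longleftrightarrow>
   (\<exists>x\<in>Tr. (u = UDL x (ereal (t + (dm - dc))) \<and> ts s x = Coming \<and> dl s x = \<infinity>) \<or>
           (u = UDir DClose \<and> ereal t = dl s x) \<or>
           (u = UDL x \<infinity> \<and> ts s x = Empty \<and> dl s x < \<infinity>)) \<or>
   (u = UDir DOpen \<and> dir s = DClose \<and> safe_to_open Tr do t s)"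
  unfolding upds.simps UN_iff Un_iff mem_if_single by blast

declare upds.simps[simp del]

lemma UC_dir: "UDir v \<in> upds Tr dc do dm Controller t s \<longleftrightarrow>
   (v = DClose \<and> (\<exists>x\<in>Tr. ereal t = dl s x)) \<or> (v = DOpen \<and> dir s = DClose \<and> safe_to_open Tr do t s)"
  unfolding mem_UC by auto

lemma UC_dl: "UDL x v \<in> upds Tr dc do dm Controller t s \<longleftrightarrow>
   x \<in> Tr \<and> ((v = ereal (t + (dm - dc)) \<and> ts s x = Coming \<and> dl s x = \<infinity>) \<or>
           (v = \<infinity> \<and> ts s x = Empty \<and> dl s x < \<infinity>))"
  unfolding mem_UC by auto

lemma UC_gate: "UGate v \<notin> upds Tr dc do dm Controller t s"
  unfolding mem_UC by auto

lemma UC_consistent: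
  assumes "\<not> (UDir DClose \<in> upds Tr dc do dm Controller t s \<and> UDir DOpen \<in> upds Tr dc do dm Controller t s)"
  shows "consistent (upds Tr dc do dm Controller t s)"
  unfolding consistent_def
proof (intro ballI impI)
  fix u v assume u: "u \<in> upds Tr dc do dm Controller t s" and v: "v \<in> upds Tr dc do dm Controller t s"
    and l: "loc u = loc v"
  show "u = v"
  proof (cases u)
    case (UDL x a)
    then obtain b where vb: "v = UDL x b" using l by (cases v) auto
    show ?thesis using u v unfolding UDL vb UC_dl by auto
  next
    case (UDir a)
    then obtain b where vb: "v = UDir b" using l by (cases v) auto
    show ?thesis using u v assms unfolding UDir vb UC_dir by auto
  next
    case (UGate a) then show ?thesis using u UC_gate[of a Tr dc do dm t s] by simp
  qed
qed

lemma the_dir: "consistent U \<Longrightarrow> UDir v \<in> U \<Longrightarrow> (THE v. UDir v \<in> U) = v"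
  unfolding consistent_def by (rule the_equality) force+

lemma the_dl: "consistent U \<Longrightarrow> UDL x v \<in> U \<Longrightarrow> (THE v. UDL x v \<in> U) = v"
  unfolding consistent_def by (rule the_equality) force+

lemma apply_upd_dir: "dir (apply_upd U s) = (if \<exists>v. UDir v \<in> U then THE v. UDir v \<in> U else dir s)"
  by (simp add: apply_upd_def)
lemma apply_upd_dl: "dl (apply_upd U s) = (\<lambda>x. if \<exists>v. UDL x v \<in> U then THE v. UDL x v \<in> U else dl s x)"
  by (simp add: apply_upd_def)
lemma apply_upd_gate: "gate (apply_upd U s) = (if \<exists>v. UGate v \<in> U then THE v. UGate v \<in> U else gate s)"
  by (simp add: apply_upd_def)

definition UU where "UU Tr dc do dm M t s = (\<Union>A\<in>M. if consistent (upds Tr dc do dm A t s) then upds Tr dc do dm A t s else {})"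

lemma exec_UU: "exec Tr dc do dm M t s = apply_upd (UU Tr dc do dm M t s) s"
  by (simp add: exec_def UU_def)

lemma UU_mem: "u \<in> UU Tr dc do dm M t s \<longleftrightarrow> (\<exists>A\<in>M. consistent (upds Tr dc do dm A t s) \<and> u \<in> upds Tr dc do dm A t s)"
  unfolding UU_def by auto

lemma UU_dir: "UDir v \<in> UU Tr dc do dm M t s \<longleftrightarrow>
   Controller \<in> M \<and> consistent (upds Tr dc do dm Controller t s) \<and> UDir v \<in> upds Tr dc do dm Controller t s"
  unfolding UU_mem
proof
  assume "\<exists>A\<in>M. consistent (upds Tr dc do dm A t s) \<and> UDir v \<in> upds Tr dc do dm A t s"
  then obtain A where A: "A \<in> M" "consistent (upds Tr dc do dm A t s)" "UDir v \<in> upds Tr dc do dm A t s" by blast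
  then show "Controller \<in> M \<and> consistent (upds Tr dc do dm Controller t s) \<and> UDir v \<in> upds Tr dc do dm Controller t s"
    by (cases A) (simp_all add: upds_gate)
qed blast

lemma UU_dl: "UDL x v \<in> UU Tr dc do dm M t s \<longleftrightarrow>
   Controller \<in> M \<and> consistent (upds Tr dc do dm Controller t s) \<and> UDL x v \<in> upds Tr dc do dm Controller t s"
  unfolding UU_mem
proof
  assume "\<exists>A\<in>M. consistent (upds Tr dc do dm A t s) \<and> UDL x v \<in> upds Tr dc do dm A t s"
  then obtain A where A: "A \<in> M" "consistent (upds Tr dc do dm A t s)" "UDL x v \<in> upds Tr dc do dm A t s" by blast
  then show "Controller \<in> M \<and> consistent (upds Tr dc do dm Controller t s) \<and> UDL x v \<in> upds Tr dc do dm Controller t s"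
    by (cases A) (simp_all add: upds_gate)
qed blast

lemma UU_gate: "UGate v \<in> UU Tr dc do dm M t s \<longleftrightarrow> Gate \<in> M \<and> v = gm (dir s)"
  unfolding UU_mem
proof
  assume "\<exists>A\<in>M. consistent (upds Tr dc do dm A t s) \<and> UGate v \<in> upds Tr dc do dm A t s"
  then obtain A where A: "A \<in> M" "consistent (upds Tr dc do dm A t s)" "UGate v \<in> upds Tr dc do dm A t s" by blast
  then show "Gate \<in> M \<and> v = gm (dir s)"
    using UC_gate[of v Tr dc do dm t s] by (cases A) (simp_all add: upds_gate)
next
  assume "Gate \<in> M \<and> v = gm (dir s)"
  moreover have "consistent (upds Tr dc do dm Gate t s)" by (simp add: upds_gate consistent_def)
  ultimately show "\<exists>A\<in>M. consistent (upds Tr dc do dm A t s) \<and> UGate v \<in> upds Tr dc do dm A t s"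
    by (intro bexI[of _ Gate]) (simp_all add: upds_gate)
qed

lemma exec_gate: "gate (exec Tr dc do dm M t s) = (if Gate \<in> M then gm (dir s) else gate s)"
  unfolding exec_UU apply_upd_gate UU_gate by auto

lemma exec_dir: "dir (exec Tr dc do dm M t s) =
   (if Controller \<in> M \<and> consistent (upds Tr dc do dm Controller t s)
    then dir (apply_upd (upds Tr dc do dm Controller t s) s) else dir s)"
  unfolding exec_UU apply_upd_dir UU_dir by auto

lemma exec_dl: "dl (exec Tr dc do dm M t s) =
   (if Controller \<in> M \<and> consistent (upds Tr dc do dm Controller t s)
    then dl (apply_upd (upds Tr dc do dm Controller t s) s) else dl s)"
  unfolding exec_UU apply_upd_dl UU_dl by auto

lemma nochange_dir: "consistent U \<Longrightarrow> \<forall>u\<in>U. \<not> changes u s \<Longrightarrow> dir (apply_upd U s) = dir s"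
  unfolding apply_upd_dir using the_dir by fastforce

lemma nochange_dl: "consistent U \<Longrightarrow> \<forall>u\<in>U. \<not> changes u s \<Longrightarrow> dl (apply_upd U s) = dl s"
  unfolding apply_upd_dl using the_dl by fastforce

lemma exec_empty: "exec Tr dc do dm {} t s = s"
  by (simp add: exec_def apply_upd_def)

lemma locate_right:
  fixes tt :: "nat \<Rightarrow> real"
  assumes "tt 0 = 0" "\<forall>i<n. tt i < tt (Suc i)" "0 \<le> t" "t < tt n"
  shows "\<exists>i<n. tt i \<le> t \<and> t < tt (Suc i)"
  using assms
proof (induction n)
  case 0 then show ?case by simp
next
  case (Suc n)
  show ?case
  proof (cases "t < tt n")
    case True then show ?thesis using Suc by (metis less_Suc_eq)
  next
    case False then show ?thesis using Suc.prems by auto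
  qed
qed

lemma locate_left:
  fixes tt :: "nat \<Rightarrow> real"
  assumes "tt 0 = 0" "\<forall>i<n. tt i < tt (Suc i)" "0 < t" "t \<le> tt n"
  shows "\<exists>i<n. tt i < t \<and> t \<le> tt (Suc i)"
  using assms
proof (induction n)
  case 0 then show ?case by simp
next
  case (Suc n)
  show ?case
  proof (cases "t \<le> tt n")
    case True then show ?thesis using Suc by (metis less_Suc_eq)
  next
    case False then show ?thesis using Suc.prems by auto
  qed
qed

locale rrun =
  fixes Tracks :: "'tr set" and dclose dopen dmin dmax :: real
    and TS :: "real \<Rightarrow> 'tr \<Rightarrow> tstat" and DL :: "real \<Rightarrow> 'tr \<Rightarrow> ereal"
    and Di :: "real \<Rightarrow> dirv" and GS :: "real \<Rightarrow> gstat"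
  assumes dclose_pos: "0 < dclose" and dopen_pos: "0 < dopen"
    and dclose_lt: "dclose < dmin" and dmin_ge: "dmin \<ge> dclose + dopen"
    and reg: "regular_run Tracks dclose dopen dmin dmax TS DL Di GS"
    and Di0: "Di 0 = DOpen" and GS0: "GS 0 = Opened"
begin

abbreviation "r \<equiv> rho Tracks TS DL Di GS"
abbreviation "W \<equiv> dmin - dclose"
abbreviation "UC t \<equiv> upds Tracks dclose dopen dmin Controller t (r t)"

lemma r_dir[simp]: "dir (r t) = Di t" by (simp add: rho_def)
lemma r_gate[simp]: "gate (r t) = GS t" by (simp add: rho_def)
lemma r_dl[simp]: "x \<in> Tracks \<Longrightarrow> dl (r t) x = DL t x" by (simp add: rho_def)
lemma r_ts[simp]: "x \<in> Tracks \<Longrightarrow> ts (r t) x = TS t x" by (simp add: rho_def)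

lemma safe_r: "safe_to_open Tracks dopen t (r t) \<longleftrightarrow> (\<forall>x\<in>Tracks. TS t x = Empty \<or> ereal (t + dopen) < DL t x)"
  unfolding safe_to_open_def by simp

lemma run: "is_run Tracks dclose dopen dmin TS DL Di GS"
  using reg unfolding regular_run_def Let_def by blast
lemma init: "x \<in> Tracks \<Longrightarrow> TS 0 x = Empty \<and> DL 0 x = \<infinity>"
  using reg unfolding regular_run_def Let_def by blast
lemma tm: "x \<in> Tracks \<Longrightarrow> train_motion (\<lambda>t. TS t x) dmin dmax"
  using reg unfolding regular_run_def Let_def by blast
lemma ctrl_imm: "t \<ge> 0 \<Longrightarrow> enabled Tracks dclose dopen dmin Controller t (r t) \<Longrightarrow>
    fires Tracks dclose dopen dmin TS DL Di GS Controller t"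
  using reg unfolding regular_run_def Let_def by blast
lemma gate_close: "t \<ge> 0 \<Longrightarrow> \<exists>u. t < u \<and> u < t + dclose \<and> \<not> (Di u = DClose \<and> GS u = Opened)"
  using reg unfolding regular_run_def Let_def by blast
lemma gate_open: "t \<ge> 0 \<Longrightarrow> \<exists>u. t < u \<and> u < t + dopen \<and> \<not> (Di u = DOpen \<and> GS u = Closed)"
  using reg unfolding regular_run_def Let_def by blast

lemma prerun: "pre_run r" using run unfolding is_run_def Let_def by blast
lemma run_right: "t \<ge> 0 \<Longrightarrow> right_val r t s \<Longrightarrow> s \<noteq> r t \<Longrightarrow>
   (\<exists>M. s = exec Tracks dclose dopen dmin M t (r t)) \<and> ts s = ts (r t)"
  using run unfolding is_run_def Let_def by blast
lemma run_left: "t > 0 \<Longrightarrow> left_val r t s \<Longrightarrow> s \<noteq> r t \<Longrightarrow>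
   dl s = dl (r t) \<and> dir s = dir (r t) \<and> gate s = gate (r t)"
  using run unfolding is_run_def Let_def by blast

lemma rv_ex: assumes "t \<ge> 0" shows "\<exists>s. right_val r t s"
proof -
  obtain n tt where P: "tt 0 = 0" "tt n = t + 1" "\<forall>i<n. tt i < tt (Suc i)"
    "\<forall>i<n. \<forall>u v. tt i < u \<and> u < tt (Suc i) \<and> tt i < v \<and> v < tt (Suc i) \<longrightarrow> r u = r v"
    using prerun assms unfolding pre_run_def by (meson add_nonneg_pos zero_less_one)
  obtain i where i: "i < n" "tt i \<le> t" "t < tt (Suc i)" using locate_right[of tt n t] P assms by auto
  define m where "m = (t + tt (Suc i)) / 2"
  have "right_val r t (r m)" unfolding right_val_def
  proof (intro exI[of _ "tt (Suc i) - t"] conjI allI impI)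
    fix u assume "t < u \<and> u < t + (tt (Suc i) - t)"
    then show "r u = r m" using P(4) i unfolding m_def by auto
  qed (use i in auto)
  then show ?thesis by blast
qed

lemma lv_ex: assumes "t > 0" shows "\<exists>s. left_val r t s"
proof -
  obtain n tt where P: "tt 0 = 0" "tt n = t" "\<forall>i<n. tt i < tt (Suc i)"
    "\<forall>i<n. \<forall>u v. tt i < u \<and> u < tt (Suc i) \<and> tt i < v \<and> v < tt (Suc i) \<longrightarrow> r u = r v"
    using prerun assms unfolding pre_run_def by meson
  obtain i where i: "i < n" "tt i < t" "t \<le> tt (Suc i)" using locate_left[of tt n t] P assms by auto
  define m where "m = (t + tt i) / 2"
  have "left_val r t (r m)" unfolding left_val_def
  proof (intro exI[of _ "t - tt i"] conjI allI impI)
    fix u assume "t - (t - tt i) < u \<and> u < t"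
    then show "r u = r m" using P(4) i unfolding m_def by auto
  qed (use i in auto)
  then show ?thesis by blast
qed

lemma finite_sig: assumes "\<tau> > 0" shows "finite (pos_sig Di \<inter> {..<\<tau>})"
proof -
  obtain n tt where P: "tt 0 = 0" "tt n = \<tau>" "\<forall>i<n. tt i < tt (Suc i)"
    "\<forall>i<n. \<forall>u v. tt i < u \<and> u < tt (Suc i) \<and> tt i < v \<and> v < tt (Suc i) \<longrightarrow> r u = r v"
    using prerun assms unfolding pre_run_def by meson
  have "pos_sig Di \<inter> {..<\<tau>} \<subseteq> tt ` {..n}"
  proof
    fix t assume t: "t \<in> pos_sig Di \<inter> {..<\<tau>}"
    show "t \<in> tt ` {..n}"
    proof (rule ccontr)
      assume nt: "t \<notin> tt ` {..n}"
      have t0: "t > 0" using t unfolding pos_sig_def by auto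
      obtain i where i: "i < n" "tt i \<le> t" "t < tt (Suc i)" using locate_right[of tt n t] P t t0 by auto
      have "tt i \<noteq> t" using nt i by auto
      then have i2: "tt i < t" using i by auto
      define e where "e = min (t - tt i) (tt (Suc i) - t)"
      have e: "e > 0" using i i2 unfolding e_def by auto
      obtain a where a: "a \<ge> 0" "\<bar>a - t\<bar> < e" "Di a \<noteq> Di t" using t e unfolding pos_sig_def by blast
      have "r a = r t" using P(4) i a(2) unfolding e_def by (auto simp: abs_if split: if_splits)
      then have "Di a = Di t" by (metis r_dir)
      then show False using a by simp
    qed
  qed
  then show ?thesis by (meson finite_atMost finite_imageI finite_subset)
qed

end

context rrun begin

lemma rv_step: assumes "t \<ge> 0" "right_val r t s"
  shows "(\<exists>M. s = exec Tracks dclose dopen dmin M t (r t)) \<and> ts s = ts (r t)"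
proof (cases "s = r t")
  case True then show ?thesis using exec_empty by metis
next
  case False then show ?thesis using run_right assms by blast
qed

lemma lv_step: assumes "t > 0" "left_val r t s"
  shows "dl s = dl (r t) \<and> dir s = Di t \<and> gate s = GS t"
  using run_left[OF assms] by (cases "s = r t") auto

lemma Di_left: assumes "t > 0" shows "left_val Di t (Di t)"
proof -
  obtain s where s: "left_val r t s" using lv_ex assms by blast
  have "left_val (\<lambda>u. dir (r u)) t (dir s)" by (rule lv_map[OF s])
  then show ?thesis using lv_step[OF assms s] by simp
qed

lemma GS_left: assumes "t > 0" shows "left_val GS t (GS t)"
proof -
  obtain s where s: "left_val r t s" using lv_ex assms by blast
  have "left_val (\<lambda>u. gate (r u)) t (gate s)" by (rule lv_map[OF s])
  then show ?thesis using lv_step[OF assms s] by simp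
qed

lemma DL_left: assumes "t > 0" "x \<in> Tracks" shows "left_val (\<lambda>u. DL u x) t (DL t x)"
proof -
  obtain s where s: "left_val r t s" using lv_ex assms by blast
  have "left_val (\<lambda>u. dl (r u) x) t (dl s x)" by (rule lv_map[OF s])
  then show ?thesis using lv_step[OF assms(1) s] assms(2) by simp
qed

lemma TS_left: assumes "t > 0" "x \<in> Tracks" shows "\<exists>v. left_val (\<lambda>u. TS u x) t v"
proof -
  obtain s where s: "left_val r t s" using lv_ex assms by blast
  have "left_val (\<lambda>u. ts (r u) x) t (ts s x)" by (rule lv_map[OF s])
  then show ?thesis using assms(2) by auto
qed

lemma TS_right: assumes "t \<ge> 0" "x \<in> Tracks" shows "right_val (\<lambda>u. TS u x) t (TS t x)"
proof -
  obtain s where s: "right_val r t s" using rv_ex assms by blast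
  have "right_val (\<lambda>u. ts (r u) x) t (ts s x)" by (rule rv_map[OF s])
  then show ?thesis using rv_step[OF assms(1) s] assms(2) by simp
qed

lemma Di_rv: "right_val r t s \<Longrightarrow> right_val Di t (dir s)"
  using rv_map[of r t s dir] by simp
lemma GS_rv: "right_val r t s \<Longrightarrow> right_val GS t (gate s)"
  using rv_map[of r t s gate] by simp
lemma DL_rv: "right_val r t s \<Longrightarrow> x \<in> Tracks \<Longrightarrow> right_val (\<lambda>u. DL u x) t (dl s x)"
  using rv_map[of r t s "\<lambda>z. dl z x"] by simp

lemma ctrl_step: assumes t: "t \<ge> 0" and s: "right_val r t s" and c: "consistent (UC t)"
  shows "dir s = dir (apply_upd (UC t) (r t)) \<and> dl s = dl (apply_upd (UC t) (r t))"
proof (cases "enabled Tracks dclose dopen dmin Controller t (r t)")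
  case True
  then have "fires Tracks dclose dopen dmin TS DL Di GS Controller t" using ctrl_imm t by blast
  then obtain s' M where s': "right_val r t s'" "Controller \<in> M" "s' = exec Tracks dclose dopen dmin M t (r t)"
    unfolding fires_def Let_def by blast
  have ss: "s' = s" by (rule rv_unique[OF s'(1) s])
  have "dir s' = dir (apply_upd (UC t) (r t)) \<and> dl s' = dl (apply_upd (UC t) (r t))"
    unfolding s'(3) exec_dir exec_dl using s'(2) c by simp
  then show ?thesis unfolding ss .
next
  case False
  then have nc: "\<forall>u\<in>UC t. \<not> changes u (r t)" using c unfolding enabled_def by blast
  obtain M where M: "s = exec Tracks dclose dopen dmin M t (r t)" using rv_step[OF t s] by blast
  show ?thesis using nochange_dir[OF c nc] nochange_dl[OF c nc] unfolding M exec_dir exec_dl by auto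
qed

lemma gate_step: assumes t: "t \<ge> 0" and s: "right_val r t s"
  shows "gate s = GS t \<or> gate s = gm (Di t)"
proof -
  obtain M where M: "s = exec Tracks dclose dopen dmin M t (r t)" using rv_step[OF t s] by blast
  show ?thesis unfolding M exec_gate by simp
qed

lemma dir_close_step: assumes t: "t \<ge> 0" and s: "right_val r t s" and c: "consistent (UC t)"
  and d: "dir s = DClose" "Di t = DOpen"
  shows "\<exists>x\<in>Tracks. ereal t = DL t x"
proof -
  have e: "dir (apply_upd (UC t) (r t)) = DClose" using ctrl_step[OF t s c] d by simp
  have "\<exists>v. UDir v \<in> UC t"
  proof (rule ccontr)
    assume "\<not> (\<exists>v. UDir v \<in> UC t)"
    then show False using e d unfolding apply_upd_dir by simp
  qed
  then obtain v where v: "UDir v \<in> UC t" by blast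
  have "dir (apply_upd (UC t) (r t)) = v" unfolding apply_upd_dir using the_dir[OF c v] v by auto
  then have "v = DClose" using e by simp
  then show ?thesis using v unfolding UC_dir by auto
qed

lemma dir_open_step: assumes t: "t \<ge> 0" and s: "right_val r t s" and c: "consistent (UC t)"
  and d: "dir s = DOpen" "Di t = DClose"
  shows "\<forall>x\<in>Tracks. TS t x = Empty \<or> ereal (t + dopen) < DL t x"
proof -
  have e: "dir (apply_upd (UC t) (r t)) = DOpen" using ctrl_step[OF t s c] d by simp
  have "\<exists>v. UDir v \<in> UC t"
  proof (rule ccontr)
    assume "\<not> (\<exists>v. UDir v \<in> UC t)"
    then show False using e d unfolding apply_upd_dir by simp
  qed
  then obtain v where v: "UDir v \<in> UC t" by blast
  have "dir (apply_upd (UC t) (r t)) = v" unfolding apply_upd_dir using the_dir[OF c v] v by auto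
  then have "v = DOpen" using e by simp
  then show ?thesis using v unfolding UC_dir safe_r by auto
qed

lemma dl_step: assumes t: "t \<ge> 0" and s: "right_val r t s" and c: "consistent (UC t)" and x: "x \<in> Tracks"
  shows "dl s x = (if TS t x = Coming \<and> DL t x = \<infinity> then ereal (t + W)
                   else if TS t x = Empty \<and> DL t x < \<infinity> then \<infinity> else DL t x)"
proof -
  have e: "dl s x = dl (apply_upd (UC t) (r t)) x" using ctrl_step[OF t s c] by simp
  show ?thesis
  proof (cases "TS t x = Coming \<and> DL t x = \<infinity>")
    case True
    then have m: "UDL x (ereal (t + W)) \<in> UC t" unfolding UC_dl using x by simp
    then show ?thesis using e the_dl[OF c m] True unfolding apply_upd_dl by auto
  next
    case F1: False
    show ?thesis
    proof (cases "TS t x = Empty \<and> DL t x < \<infinity>")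
      case True
      then have m: "UDL x \<infinity> \<in> UC t" unfolding UC_dl using x by simp
      then show ?thesis using e the_dl[OF c m] True F1 unfolding apply_upd_dl by auto
    next
      case False
      then have "\<not> (\<exists>v. UDL x v \<in> UC t)" using F1 x unfolding UC_dl by auto
      then show ?thesis using e F1 False x unfolding apply_upd_dl by simp
    qed
  qed
qed

end

lemma phase_start:
  fixes f :: "real \<Rightarrow> tstat"
  assumes ph: "phase_ok f dmin dmax tt i" and t1: "tt (3*i) \<le> t" and t2: "t < tt (3*i+3)"
    and ft: "f t \<noteq> Empty" and e: "e > 0" "\<forall>u. t-e<u \<and> u<t \<longrightarrow> f u = Empty"
  shows "\<forall>u. t \<le> u \<and> u < t + dmin \<longrightarrow> f u = Coming"
proof -
  have P1: "\<forall>t. tt (3*i) \<le> t \<and> t < tt (3*i+1) \<longrightarrow> f t = Empty"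
   and P2: "\<forall>t. tt (3*i+1) \<le> t \<and> t < tt (3*i+2) \<longrightarrow> f t = Coming"
   and P3: "dmin \<le> tt (3*i+2) - tt (3*i+1)"
   and P4: "\<forall>t. tt (3*i+2) \<le> t \<and> t < tt (3*i+3) \<longrightarrow> f t = Incrossing"
    using ph unfolding phase_ok_def by blast+
  have a: "tt (3*i+1) \<le> t" using P1 t1 ft by force
  have b: "t = tt (3*i+1)"
  proof (rule ccontr)
    assume "t \<noteq> tt (3*i+1)"
    then have lt: "tt (3*i+1) < t" using a by simp
    define u where "u = max (tt (3*i+1)) (t - e/2)"
    have u: "t - e < u" "u < t" "tt (3*i+1) \<le> u" "u < tt (3*i+3)" using lt e t2 unfolding u_def by auto
    have "f u = Empty" using e u by blast
    moreover have "f u \<noteq> Empty"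
    proof (cases "u < tt (3*i+2)")
      case True then show ?thesis using P2 u by force
    next
      case False then show ?thesis using P4 u by force
    qed
    ultimately show False by simp
  qed
  show ?thesis
  proof (intro allI impI)
    fix u assume "t \<le> u \<and> u < t + dmin"
    then show "f u = Coming" using P2 P3 b by auto
  qed
qed

lemma tt_lower:
  fixes tt :: "nat \<Rightarrow> real"
  assumes "tt 0 = 0" "strict_mono tt" "\<forall>i. phase_ok f dmin dmax tt i"
  shows "tt (3*i) \<ge> real i * dmin"
proof (induction i)
  case 0 then show ?case using assms by simp
next
  case (Suc i)
  have "dmin \<le> tt (3*i+2) - tt (3*i+1)" using assms(3) unfolding phase_ok_def by blast
  moreover have "tt (3*i) < tt (3*i+1)" "tt (3*i+2) < tt (3*i+3)" using assms(2) by (auto simp: strict_mono_def)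
  moreover have "3 * Suc i = 3*i+3" by simp
  ultimately show ?case using Suc.IH by (simp add: algebra_simps)
qed

lemma tm_start_gen:
  fixes f :: "real \<Rightarrow> tstat"
  assumes tm: "train_motion f dmin dmax" and dm: "dmin > 0" and f0: "f 0 = Empty"
    and t: "t > 0" and ft: "f t \<noteq> Empty" and e: "e > 0" "\<forall>u. t-e<u \<and> u<t \<longrightarrow> f u = Empty"
  shows "\<forall>u. t \<le> u \<and> u < t + dmin \<longrightarrow> f u = Coming"
  using tm unfolding train_motion_def
proof (elim disjE exE conjE)
  fix tt :: "nat \<Rightarrow> real"
  assume tt0: "tt 0 = 0" and sm: "strict_mono tt" and ph: "\<forall>i. phase_ok f dmin dmax tt i"
  obtain n :: nat where n: "t / dmin < real n" using reals_Archimedean2 by blast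
  have "t < real n * dmin" using n dm by (simp add: field_simps)
  then have ex: "\<exists>m. t < tt (3*m)" using tt_lower[OF tt0 sm ph, of n] by (meson less_le_trans)
  obtain m where m: "t < tt (3*m)" "\<forall>k<m. \<not> t < tt (3*k)"
    using exists_least_iff[THEN iffD1, OF ex] by blast
  have "m \<noteq> 0" using m t tt0 by (metis mult_zero_right not_less_iff_gr_or_eq)
  then obtain j where j: "m = Suc j" by (cases m) auto
  have e3: "3*m = 3*j+3" using j by simp
  have tj: "tt (3*j) \<le> t" "t < tt (3*j+3)" using m(1) m(2)[rule_format, of j] j unfolding e3 by (auto simp: not_less)
  show ?thesis by (rule phase_start[OF ph[rule_format, of j] tj ft e])
next
  fix tt :: "nat \<Rightarrow> real" and k :: nat
  assume tt0: "tt 0 = 0" and dv: "3 dvd k" and mono: "\<forall>i j. i < j \<and> j \<le> k \<longrightarrow> tt i < tt j"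
    and ph: "\<forall>i. 3*i+3 \<le> k \<longrightarrow> phase_ok f dmin dmax tt i" and fin: "\<forall>t\<ge>tt k. f t = Empty"
  obtain K where K: "k = 3*K" using dv by blast
  have tk: "t < tt (3*K)"
  proof (rule ccontr)
    assume "\<not> t < tt (3*K)"
    then have "f t = Empty" using fin K by (simp add: not_less)
    then show False using ft by simp
  qed
  obtain m where m: "t < tt (3*m)" "\<forall>k<m. \<not> t < tt (3*k)"
    using exists_least_iff[THEN iffD1, of "\<lambda>m. t < tt (3*m)"] tk by blast
  have mK: "m \<le> K" using m(2) tk by (meson not_le)
  have "m \<noteq> 0" using m t tt0 by (metis mult_zero_right not_less_iff_gr_or_eq)
  then obtain j where j: "m = Suc j" by (cases m) auto
  have e3: "3*m = 3*j+3" using j by simp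
  have tj: "tt (3*j) \<le> t" "t < tt (3*j+3)" using m(1) m(2)[rule_format, of j] j unfolding e3 by (auto simp: not_less)
  have "3*j+3 \<le> k" using mK j K by simp
  then show ?thesis by (rule phase_start[OF ph[rule_format] tj ft e])
qed

context rrun begin

definition startC where
  "startC x c \<longleftrightarrow> c > 0 \<and> (\<exists>e>0. \<forall>u. c-e<u \<and> u<c \<longrightarrow> TS u x = Empty) \<and>
     (\<forall>u. c \<le> u \<and> u < c + dmin \<longrightarrow> TS u x = Coming)"

definition Inv where
  "Inv x t \<longleftrightarrow> (DL t x = \<infinity> \<and> (TS t x \<noteq> Empty \<longrightarrow> startC x t)) \<or>
     (\<exists>c. startC x c \<and> c < t \<and> DL t x = ereal (c + W) \<and> (\<forall>u. c \<le> u \<and> u < t \<longrightarrow> TS u x \<noteq> Empty))"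

lemma dmin_pos: "dmin > 0" using dclose_pos dclose_lt by simp
lemma W_pos: "W > 0" using dclose_lt by simp
lemma W_ge: "W \<ge> dopen" using dmin_ge by simp

lemma tm_start:
  assumes x: "x \<in> Tracks" and t: "t > 0" and ft: "TS t x \<noteq> Empty"
    and e: "e > 0" "\<forall>u. t-e<u \<and> u<t \<longrightarrow> TS u x = Empty"
  shows "startC x t"
  unfolding startC_def using tm_start_gen[OF tm[OF x] dmin_pos _ t ft e] init[OF x] t e by blast

lemma start_before:
  assumes "c1 < c2" "startC x c2" "c2 < T" "\<forall>u. c1 \<le> u \<and> u < T \<longrightarrow> TS u x \<noteq> Empty"
  shows False
proof -
  obtain e where e: "e > 0" "\<forall>u. c2-e<u \<and> u<c2 \<longrightarrow> TS u x = Empty" using assms(2) unfolding startC_def by blast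
  define u where "u = max c1 (c2 - e/2)"
  have "c2 - e < u" "u < c2" "c1 \<le> u" "u < T" using assms(1,3) e unfolding u_def by auto
  then show False using e assms(4) by blast
qed

lemma start_unique:
  assumes "startC x c1" "startC x c2" "c1 < T" "c2 < T"
    "\<forall>u. c1 \<le> u \<and> u < T \<longrightarrow> TS u x \<noteq> Empty" "\<forall>u. c2 \<le> u \<and> u < T \<longrightarrow> TS u x \<noteq> Empty"
  shows "c1 = c2"
proof (rule ccontr)
  assume "c1 \<noteq> c2"
  then have "c1 < c2 \<or> c2 < c1" by auto
  then show False using start_before assms by metis
qed

lemma inv_cons: assumes "\<forall>x\<in>Tracks. Inv x t" shows "consistent (UC t)"
proof (rule UC_consistent, rule notI)
  assume A: "UDir DClose \<in> UC t \<and> UDir DOpen \<in> UC t"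
  then obtain x where x: "x \<in> Tracks" "ereal t = DL t x" unfolding UC_dir by auto
  have safe: "TS t x = Empty \<or> ereal (t + dopen) < DL t x" using A x(1) unfolding UC_dir safe_r by auto
  have "Inv x t" using assms x by blast
  moreover have "DL t x \<noteq> \<infinity>" using x(2) by auto
  ultimately obtain c where c: "startC x c" "c < t" "DL t x = ereal (c + W)"
    unfolding Inv_def by blast
  have tc: "t = c + W" using c(3) x(2) by simp
  have "TS t x = Coming" using c(1) tc W_pos dclose_pos unfolding startC_def by auto
  then have "ereal (t + dopen) < ereal t" using safe x(2) by auto
  then show False using dopen_pos by simp
qed

end

context rrun begin

lemma inv_right:
  assumes t: "t \<ge> 0" and I: "\<forall>x\<in>Tracks. Inv x t"
  shows "\<exists>e>0. \<forall>u. t < u \<and> u < t + e \<longrightarrow> (\<forall>x\<in>Tracks. Inv x u)"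
proof -
  have c: "consistent (UC t)" using inv_cons I by blast
  obtain s where s: "right_val r t s" using rv_ex t by blast
  obtain e where e: "e > 0" "\<forall>u. t < u \<and> u < t + e \<longrightarrow> r u = s" using s unfolding right_val_def by blast
  have tss: "ts s = ts (r t)" using rv_step[OF t s] by blast
  have DLu: "DL u x = dl s x" if "t < u" "u < t + e" "x \<in> Tracks" for u x
    using e(2) that r_dl by metis
  have TSu: "TS u x = TS t x" if "t < u" "u < t + e" "x \<in> Tracks" for u x
    using e(2) that r_ts tss by metis
  have TSu2: "TS u x = TS t x" if "t \<le> u" "u < t + e" "x \<in> Tracks" for u x
    using TSu[of u x] that by (cases "u = t") auto
  show ?thesis
  proof (intro exI[of _ e] conjI allI impI ballI)
    fix u x assume u: "t < u \<and> u < t + e" and x: "x \<in> Tracks"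
    have dls: "dl s x = (if TS t x = Coming \<and> DL t x = \<infinity> then ereal (t + W)
                   else if TS t x = Empty \<and> DL t x < \<infinity> then \<infinity> else DL t x)"
      by (rule dl_step[OF t s c x])
    have Ix: "Inv x t" using I x by blast
    show "Inv x u"
    proof (cases "DL t x = \<infinity>")
      case True
      show ?thesis
      proof (cases "TS t x = Empty")
        case E: True
        then show ?thesis unfolding Inv_def using DLu[of u x] TSu[of u x] u x dls True by simp
      next
        case NE: False
        then have st: "startC x t" using Ix True unfolding Inv_def by auto
        then have co: "TS t x = Coming" unfolding startC_def using dmin_pos by auto
        have "DL u x = ereal (t + W)" using DLu[of u x] u x dls True co by simp
        moreover have "\<forall>v. t \<le> v \<and> v < u \<longrightarrow> TS v x \<noteq> Empty"
        proof (intro allI impI)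
          fix v assume v: "t \<le> v \<and> v < u"
          then have "v < t + e" using u by simp
          then have "TS v x = TS t x" using TSu2[of v x] v x by blast
          then show "TS v x \<noteq> Empty" using NE by simp
        qed
        ultimately show ?thesis unfolding Inv_def using st u by blast
      qed
    next
      case False
      then obtain cc where cc: "startC x cc" "cc < t" "DL t x = ereal (cc + W)" "\<forall>v. cc \<le> v \<and> v < t \<longrightarrow> TS v x \<noteq> Empty"
        using Ix unfolding Inv_def by blast
      show ?thesis
      proof (cases "TS t x = Empty")
        case E: True
        then show ?thesis unfolding Inv_def using DLu[of u x] TSu[of u x] u x dls cc(3) by simp
      next
        case NE: False
        have "DL u x = DL t x" using DLu[of u x] u x dls NE False by auto
        moreover have "\<forall>v. cc \<le> v \<and> v < u \<longrightarrow> TS v x \<noteq> Empty"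
        proof (intro allI impI)
          fix v assume "cc \<le> v \<and> v < u"
          show "TS v x \<noteq> Empty"
          proof (cases "v < t")
            case True then show ?thesis using cc(4) \<open>cc \<le> v \<and> v < u\<close> by blast
          next
            case False
            then have "t \<le> v" "v < t + e" using \<open>cc \<le> v \<and> v < u\<close> u by auto
            then have "TS v x = TS t x" using TSu2[of v x] x by blast
            then show ?thesis using NE by simp
          qed
        qed
        ultimately show ?thesis unfolding Inv_def using cc u by auto
      qed
    qed
  qed (use e in auto)
qed

lemma inv_left:
  assumes t: "t > 0" and x: "x \<in> Tracks" and I: "\<And>u. 0 \<le> u \<Longrightarrow> u < t \<Longrightarrow> Inv x u"
  shows "Inv x t"
proof -
  obtain e1 where e1: "e1 > 0" "\<forall>u. t-e1<u \<and> u<t \<longrightarrow> DL u x = DL t x"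
    using DL_left[OF t x] unfolding left_val_def by blast
  obtain v where "left_val (\<lambda>u. TS u x) t v" using TS_left[OF t x] by blast
  then obtain e2 where e2: "e2 > 0" "\<forall>u. t-e2<u \<and> u<t \<longrightarrow> TS u x = v"
    unfolding left_val_def by blast
  define e where "e = min t (min e1 e2)"
  have e: "e > 0" "e \<le> t" "e \<le> e1" "e \<le> e2" using t e1 e2 unfolding e_def by auto
  have Iu: "Inv x u" "DL u x = DL t x" "TS u x = v" if "t - e < u" "u < t" for u
    using I[of u] e1 e2 e that by auto
  show ?thesis
  proof (cases "DL t x = \<infinity>")
    case True
    have "startC x t" if NE: "TS t x \<noteq> Empty"
    proof (cases "v = Empty")
      case True
      show ?thesis by (rule tm_start[OF x t NE e2(1)]) (use e2 True in auto)
    next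
      case False
      define u1 where "u1 = t - e/2"
      have u1: "t - e < u1" "u1 < t" using e unfolding u1_def by auto
      have "startC x u1" using Iu[OF u1] True False unfolding Inv_def by auto
      then obtain e3 where e3: "e3 > 0" "\<forall>u. u1-e3<u \<and> u<u1 \<longrightarrow> TS u x = Empty" unfolding startC_def by blast
      define u2 where "u2 = u1 - min e3 (e/2) / 2"
      have u2: "t - e < u2" "u2 < t" "u1 - e3 < u2" "u2 < u1" using e e3 unfolding u2_def u1_def by auto
      then show ?thesis using Iu(3)[OF u2(1,2)] e3 False by auto
    qed
    then show ?thesis unfolding Inv_def using True by blast
  next
    case False
    define u1 where "u1 = t - e/2"
    have u1: "t - e < u1" "u1 < t" using e unfolding u1_def by auto
    obtain cc where cc: "startC x cc" "cc < u1" "DL t x = ereal (cc + W)"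
      using Iu[OF u1] False unfolding Inv_def by auto
    have ne: "\<forall>w. cc \<le> w \<and> w < t \<longrightarrow> TS w x \<noteq> Empty"
    proof (intro allI impI)
      fix w assume w: "cc \<le> w \<and> w < t"
      define u3 where "u3 = (max w u1 + t) / 2"
      have u3: "t - e < u3" "u3 < t" "w < u3" using u1 w unfolding u3_def by auto
      obtain c3 where c3: "DL t x = ereal (c3 + W)" "\<forall>v. c3 \<le> v \<and> v < u3 \<longrightarrow> TS v x \<noteq> Empty"
        using Iu[OF u3(1,2)] False unfolding Inv_def by auto
      have "c3 = cc" using c3(1) cc(3) by simp
      then show "TS w x \<noteq> Empty" using c3(2) w u3 by auto
    qed
    show ?thesis unfolding Inv_def using cc u1 ne by auto
  qed
qed

lemma inv_all: assumes "t \<ge> 0" "x \<in> Tracks" shows "Inv x t"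
proof -
  have "\<forall>x\<in>Tracks. Inv x t"
  proof (rule real_ind[where P="\<lambda>t. \<forall>x\<in>Tracks. Inv x t" and a=0 and b=t])
    show "0 \<le> t" by fact
    show "\<forall>x\<in>Tracks. Inv x 0" using init unfolding Inv_def by auto
  next
    fix t' assume "0 \<le> t'" "t' < t" "\<And>u. 0 \<le> u \<Longrightarrow> u \<le> t' \<Longrightarrow> \<forall>x\<in>Tracks. Inv x u"
    then show "\<exists>e>0. \<forall>u. t' < u \<and> u < t' + e \<longrightarrow> (\<forall>x\<in>Tracks. Inv x u)"
      using inv_right by blast
  next
    fix t' assume "0 < t'" "t' \<le> t" "\<And>u. 0 \<le> u \<Longrightarrow> u < t' \<Longrightarrow> \<forall>x\<in>Tracks. Inv x u"
    then show "\<forall>x\<in>Tracks. Inv x t'" using inv_left by blast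
  qed (use assms in auto)
  then show ?thesis using assms by blast
qed

lemma cons_all: "t \<ge> 0 \<Longrightarrow> consistent (UC t)"
  using inv_cons inv_all by blast

end

fun dd :: "real \<Rightarrow> real \<Rightarrow> dirv \<Rightarrow> real" where
  "dd dc dop DClose = dc" | "dd dc dop DOpen = dop"

context rrun begin

lemma close_hold:
  assumes a: "a \<ge> 0" "Di a = DOpen" "right_val Di a DClose"
  shows "\<forall>u. a < u \<and> u \<le> a + dclose \<longrightarrow> Di u = DClose"
proof -
  obtain s where s: "right_val r a s" using rv_ex a(1) by blast
  have ds: "dir s = DClose" using rv_unique[OF Di_rv[OF s] a(3)] .
  obtain x where x: "x \<in> Tracks" "ereal a = DL a x"
    using dir_close_step[OF a(1) s cons_all[OF a(1)] ds a(2)] by blast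
  have "Inv x a" using inv_all a(1) x(1) by blast
  moreover have "DL a x \<noteq> \<infinity>" using x(2) by auto
  ultimately obtain c where c: "startC x c" "c < a" "DL a x = ereal (c + W)"
    unfolding Inv_def by blast
  have ac: "a = c + W" using c(3) x(2) by simp
  have coming: "\<forall>u. c \<le> u \<and> u < c + dmin \<longrightarrow> TS u x = Coming" using c(1) unfolding startC_def by blast
  have stepR: "right_val Di u DClose" if u: "a < u" "u < a + dclose" "Di u = DClose" for u
  proof -
    have u0: "u \<ge> 0" using u a by simp
    obtain s' where s': "right_val r u s'" using rv_ex u0 by blast
    show ?thesis
    proof (cases "dir s'")
      case DClose then show ?thesis using Di_rv[OF s'] by simp
    next
      case DOpen
      have safe: "TS u x = Empty \<or> ereal (u + dopen) < DL u x"
        using dir_open_step[OF u0 s' cons_all[OF u0] DOpen u(3)] x(1) by blast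
      have cu: "TS u x = Coming" using coming u ac c(2) by auto
      then have lt: "ereal (u + dopen) < DL u x" using safe by auto
      have "Inv x u" using inv_all u0 x(1) by blast
      then show ?thesis
        unfolding Inv_def
      proof (elim disjE conjE exE)
        assume "DL u x = \<infinity>" "TS u x \<noteq> Empty \<longrightarrow> startC x u"
        then have "startC x u" using cu by simp
        moreover have "\<forall>w. c \<le> w \<and> w < c + dmin \<longrightarrow> TS w x \<noteq> Empty" using coming by auto
        ultimately have False using start_before[of c u x "c + dmin"] u ac c(2) by auto
        then show ?thesis ..
      next
        fix c' assume c': "startC x c'" "c' < u" "DL u x = ereal (c' + W)" "\<forall>w. c' \<le> w \<and> w < u \<longrightarrow> TS w x \<noteq> Empty"
        have "\<forall>w. c \<le> w \<and> w < u \<longrightarrow> TS w x \<noteq> Empty" using coming u ac by auto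
        then have "c' = c" using start_unique[OF c'(1) c(1) c'(2), of ] c'(4) c(2) u(1) by auto
        then have "ereal (u + dopen) < ereal a" using lt c'(3) ac by simp
        then have False using u dopen_pos by simp
        then show ?thesis ..
      qed
    qed
  qed
  have "u = a \<or> Di u = DClose" if "a \<le> u" "u \<le> a + dclose" for u
  proof (rule real_ind[where P="\<lambda>u. u = a \<or> Di u = DClose" and a=a and b="a + dclose"])
    show "a \<le> a + dclose" using dclose_pos by simp
  next
    fix t assume t: "a \<le> t" "t < a + dclose" and IH: "\<And>u. a \<le> u \<Longrightarrow> u \<le> t \<Longrightarrow> u = a \<or> Di u = DClose"
    show "\<exists>e>0. \<forall>u. t < u \<and> u < t + e \<longrightarrow> u = a \<or> Di u = DClose"
    proof (cases "t = a")
      case True then show ?thesis using a(3) unfolding right_val_def by blast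
    next
      case False
      then have "Di t = DClose" "a < t" using IH[of t] t by auto
      then have "right_val Di t DClose" using stepR t by blast
      then show ?thesis unfolding right_val_def by blast
    qed
  next
    fix t assume t: "a < t" "t \<le> a + dclose" and IH: "\<And>u. a \<le> u \<Longrightarrow> u < t \<Longrightarrow> u = a \<or> Di u = DClose"
    obtain e where e: "e > 0" "\<forall>u. t-e<u \<and> u<t \<longrightarrow> Di u = Di t" using Di_left[of t] t a(1) unfolding left_val_def by auto
    define p where "p = max ((a+t)/2) (t - e/2)"
    have p: "a < p" "p < t" "t - e < p" using t e unfolding p_def by (auto simp: less_max_iff_disj max_less_iff_conj)
    then have "Di p = DClose" using IH[of p] by auto
    then show "t = a \<or> Di t = DClose" using e p by auto
  qed (use that in auto)
  then show ?thesis by (metis less_eq_real_def less_irrefl)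
qed

lemma open_hold:
  assumes a: "a \<ge> 0" "Di a = DClose" "right_val Di a DOpen"
  shows "\<forall>u. a < u \<and> u \<le> a + dopen \<longrightarrow> Di u = DOpen"
proof -
  obtain s where s: "right_val r a s" using rv_ex a(1) by blast
  have ds: "dir s = DOpen" using rv_unique[OF Di_rv[OF s] a(3)] .
  have safe: "\<forall>x\<in>Tracks. TS a x = Empty \<or> ereal (a + dopen) < DL a x"
    using dir_open_step[OF a(1) s cons_all[OF a(1)] ds a(2)] .
  have stepR: "right_val Di u DOpen" if u: "a < u" "u < a + dopen" "Di u = DOpen" for u
  proof -
    have u0: "u \<ge> 0" using u a by simp
    obtain s' where s': "right_val r u s'" using rv_ex u0 by blast
    show ?thesis
    proof (cases "dir s'")
      case DOpen then show ?thesis using Di_rv[OF s'] by simp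
    next
      case DClose
      obtain x where x: "x \<in> Tracks" "ereal u = DL u x"
        using dir_close_step[OF u0 s' cons_all[OF u0] DClose u(3)] by blast
      have "Inv x u" using inv_all u0 x(1) by blast
      moreover have "DL u x \<noteq> \<infinity>" using x(2) by auto
      ultimately obtain c where c: "startC x c" "c < u" "DL u x = ereal (c + W)"
         "\<forall>w. c \<le> w \<and> w < u \<longrightarrow> TS w x \<noteq> Empty"
        unfolding Inv_def by blast
      have uc: "u = c + W" using c(3) x(2) by simp
      have False
      proof (cases "a \<le> c")
        case True then show False using uc W_ge u by simp
      next
        case False
        then have ca: "c < a" by simp
        have NE: "TS a x \<noteq> Empty" using c(4) ca u by auto
        have "Inv x a" using inv_all a(1) x(1) by blast
        then show False unfolding Inv_def
        proof (elim disjE conjE exE)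
          assume "DL a x = \<infinity>" "TS a x \<noteq> Empty \<longrightarrow> startC x a"
          then have "startC x a" using NE by simp
          then show False using start_before[of c a x u] ca u c(4) by auto
        next
          fix c' assume c': "startC x c'" "c' < a" "DL a x = ereal (c' + W)" "\<forall>w. c' \<le> w \<and> w < a \<longrightarrow> TS w x \<noteq> Empty"
          have "\<forall>w. c \<le> w \<and> w < a \<longrightarrow> TS w x \<noteq> Empty" using c(4) u by auto
          then have "c' = c" using start_unique[OF c'(1) c(1) c'(2) ca] c'(4) by auto
          then have "ereal (a + dopen) < ereal u" using safe x(1) NE c'(3) uc by auto
          then show False using u by simp
        qed
      qed
      then show ?thesis ..
    qed
  qed
  have "u = a \<or> Di u = DOpen" if "a \<le> u" "u \<le> a + dopen" for u
  proof (rule real_ind[where P="\<lambda>u. u = a \<or> Di u = DOpen" and a=a and b="a + dopen"])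
    show "a \<le> a + dopen" using dopen_pos by simp
  next
    fix t assume t: "a \<le> t" "t < a + dopen" and IH: "\<And>u. a \<le> u \<Longrightarrow> u \<le> t \<Longrightarrow> u = a \<or> Di u = DOpen"
    show "\<exists>e>0. \<forall>u. t < u \<and> u < t + e \<longrightarrow> u = a \<or> Di u = DOpen"
    proof (cases "t = a")
      case True then show ?thesis using a(3) unfolding right_val_def by blast
    next
      case False
      then have "Di t = DOpen" "a < t" using IH[of t] t by auto
      then have "right_val Di t DOpen" using stepR t by blast
      then show ?thesis unfolding right_val_def by blast
    qed
  next
    fix t assume t: "a < t" "t \<le> a + dopen" and IH: "\<And>u. a \<le> u \<Longrightarrow> u < t \<Longrightarrow> u = a \<or> Di u = DOpen"
    obtain e where e: "e > 0" "\<forall>u. t-e<u \<and> u<t \<longrightarrow> Di u = Di t" using Di_left[of t] t a(1) unfolding left_val_def by auto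
    define p where "p = max ((a+t)/2) (t - e/2)"
    have p: "a < p" "p < t" "t - e < p" using t e unfolding p_def by (auto simp: less_max_iff_disj max_less_iff_conj)
    then have "Di p = DOpen" using IH[of p] by auto
    then show "t = a \<or> Di t = DOpen" using e p by auto
  qed (use that in auto)
  then show ?thesis by (metis less_eq_real_def less_irrefl)
qed

end

lemma dirv_other: "(V::dirv) \<noteq> W \<Longrightarrow> (V = DClose \<and> W = DOpen) \<or> (V = DOpen \<and> W = DClose)"
  by (cases V; cases W) auto

lemma gstat_other: "(V::gstat) \<noteq> W \<Longrightarrow> (V = Closed \<and> W = Opened) \<or> (V = Opened \<and> W = Closed)"
  by (cases V; cases W) auto

context rrun begin

lemma dd_pos: "dd dclose dopen V > 0" using dclose_pos dopen_pos by (cases V) auto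

lemma hold: assumes "a \<ge> 0" "right_val Di a V" "V \<noteq> Di a"
  shows "\<forall>u. a < u \<and> u \<le> a + dd dclose dopen V \<longrightarrow> Di u = V"
proof (cases V)
  case DClose
  then have "Di a = DOpen" using assms(3) by (cases "Di a") auto
  then show ?thesis using close_hold[OF assms(1)] assms(2) DClose by simp
next
  case DOpen
  then have "Di a = DClose" using assms(3) by (cases "Di a") auto
  then show ?thesis using open_hold[OF assms(1)] assms(2) DOpen by simp
qed

lemma Di_rv_ex: "t \<ge> 0 \<Longrightarrow> \<exists>v. right_val Di t v"
  using rv_ex Di_rv by blast

lemma GS_rv_ex: "t \<ge> 0 \<Longrightarrow> \<exists>v. right_val GS t v"
  using rv_ex GS_rv by blast

lemma Di_nochg: assumes "t > 0" "t \<notin> pos_sig Di" shows "right_val Di t (Di t)"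
proof -
  obtain v where v: "right_val Di t v" using Di_rv_ex assms(1) by force
  then have "v = Di t" using pos_sig_iff[OF assms(1) Di_left[OF assms(1)] v] assms(2) by blast
  then show ?thesis using v by simp
qed

lemma GS_nochg: assumes "t > 0" "t \<notin> pos_sig GS" shows "right_val GS t (GS t)"
proof -
  obtain v where v: "right_val GS t v" using GS_rv_ex assms(1) by force
  then have "v = GS t" using pos_sig_iff[OF assms(1) GS_left[OF assms(1)] v] assms(2) by blast
  then show ?thesis using v by simp
qed

lemma Di_chg: assumes "t \<in> pos_sig Di" shows "t > 0 \<and> (\<exists>V. right_val Di t V \<and> V \<noteq> Di t)"
proof -
  have t: "t > 0" using assms unfolding pos_sig_def by auto
  obtain v where v: "right_val Di t v" using Di_rv_ex t by force
  then have "v \<noteq> Di t" using pos_sig_iff[OF t Di_left[OF t] v] assms by blast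
  then show ?thesis using v t by blast
qed

lemma GS_match: assumes "t \<ge> 0" "GS t = gm (Di t)" shows "right_val GS t (GS t)"
proof -
  obtain s where s: "right_val r t s" using rv_ex assms(1) by blast
  have "gate s = GS t" using gate_step[OF assms(1) s] assms(2) by auto
  then show ?thesis using GS_rv[OF s] by simp
qed

lemma GS_chg: assumes "t \<in> pos_sig GS" shows "t > 0 \<and> GS t \<noteq> gm (Di t) \<and> right_val GS t (gm (Di t))"
proof -
  have t: "t > 0" using assms unfolding pos_sig_def by auto
  obtain s where s: "right_val r t s" using rv_ex t by force
  have "gate s \<noteq> GS t" using pos_sig_iff[OF t GS_left[OF t] GS_rv[OF s]] assms by blast
  then have "gate s = gm (Di t)" using gate_step[OF _ s] t by auto
  then show ?thesis using GS_rv[OF s] t \<open>gate s \<noteq> GS t\<close> by auto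
qed

lemma next_far: assumes a: "a \<ge> 0" "right_val Di a V" "V \<noteq> Di a" and c: "c \<in> pos_sig Di" "a < c"
  shows "a + dd dclose dopen V \<le> c"
proof (rule ccontr)
  assume "\<not> a + dd dclose dopen V \<le> c"
  then have lt: "c < a + dd dclose dopen V" by simp
  have H: "\<forall>u. a < u \<and> u \<le> a + dd dclose dopen V \<longrightarrow> Di u = V" by (rule hold[OF a])
  obtain w where w: "right_val Di c w" "w \<noteq> Di c" using Di_chg[OF c(1)] by blast
  have "Di c = V" using H c lt by auto
  have "right_val Di c V" unfolding right_val_def
    by (intro exI[of _ "a + dd dclose dopen V - c"]) (use H c lt in auto)
  then have "w = V" using rv_unique[OF w(1)] by blast
  then show False using w(2) \<open>Di c = V\<close> by simp
qed

lemma gs_stay: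
  assumes t0: "0 \<le> t0" "t0 \<le> b" and D: "\<forall>u. t0 \<le> u \<and> u \<le> b \<longrightarrow> Di u = V" and g: "GS t0 = gm V"
  shows "\<forall>u. t0 \<le> u \<and> u \<le> b \<longrightarrow> GS u = gm V"
proof -
  have "GS u = gm V" if "t0 \<le> u" "u \<le> b" for u
  proof (rule real_ind[where P="\<lambda>u. GS u = gm V" and a=t0 and b=b])
    fix t assume t: "t0 \<le> t" "t < b" and IH: "\<And>u. t0 \<le> u \<Longrightarrow> u \<le> t \<Longrightarrow> GS u = gm V"
    have "GS t = gm (Di t)" using IH[of t] D t by auto
    then have "right_val GS t (gm V)" using GS_match[of t] t t0 IH[of t] by auto
    then show "\<exists>e>0. \<forall>u. t < u \<and> u < t + e \<longrightarrow> GS u = gm V" unfolding right_val_def by blast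
  next
    fix t assume t: "t0 < t" "t \<le> b" and IH: "\<And>u. t0 \<le> u \<Longrightarrow> u < t \<Longrightarrow> GS u = gm V"
    obtain e where e: "e > 0" "\<forall>u. t-e<u \<and> u<t \<longrightarrow> GS u = GS t" using GS_left[of t] t t0 unfolding left_val_def by auto
    define p where "p = max ((t0+t)/2) (t - e/2)"
    have p: "t0 < p" "p < t" "t - e < p" using t e unfolding p_def by (auto simp: less_max_iff_disj max_less_iff_conj)
    then show "GS t = gm V" using IH[of p] e by auto
  qed (use that t0 g in auto)
  then show ?thesis by blast
qed

end

context rrun begin

lemma after_rv:
  assumes a: "0 \<le> a" and D: "\<forall>u. a < u \<and> u \<le> b \<longrightarrow> Di u = V"
    and p: "a < p" "p \<le> b" "right_val GS p (gm V)" and q: "p < q" "q \<le> b"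
  shows "GS q = gm V"
proof -
  obtain e where e: "e > 0" "\<forall>u. p < u \<and> u < p + e \<longrightarrow> GS u = gm V" using p(3) unfolding right_val_def by blast
  define mm where "mm = min e (q - p)"
  define p' where "p' = p + mm / 2"
  have m: "mm > 0" "mm \<le> e" "mm \<le> q - p" using e q unfolding mm_def by auto
  have p'1: "p < p'" unfolding p'_def using m(1) by linarith
  have p'2: "p' < p + e" unfolding p'_def using m(1,2) by linarith
  have p'3: "p' < q" unfolding p'_def using m(1,3) by linarith
  note p' = p'1 p'2 p'3
  have "GS p' = gm V" using e p' by blast
  moreover have "\<forall>u. p' \<le> u \<and> u \<le> b \<longrightarrow> Di u = V" using D p p' by auto
  ultimately have "\<forall>u. p' \<le> u \<and> u \<le> b \<longrightarrow> GS u = gm V"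
    using gs_stay[of p' b V] p p' a q by auto
  then show ?thesis using p' q by auto
qed

lemma window:
  assumes a: "a > 0" and V: "right_val Di a V" "V \<noteq> Di a" and g: "GS a = gm (Di a)"
    and nod: "\<forall>c. a < c \<and> c < b \<longrightarrow> c \<notin> pos_sig Di" and bd: "a + dd dclose dopen V \<le> b"
  shows "\<exists>\<delta>. a < \<delta> \<and> \<delta> < a + dd dclose dopen V \<and> \<delta> \<in> pos_sig GS \<and>
           (\<forall>t\<in>pos_sig GS. a \<le> t \<and> t \<le> b \<longrightarrow> t = \<delta>) \<and> GS b = gm V \<and> Di b = V"
proof -
  define d where "d = dd dclose dopen V"
  have d: "d > 0" using dd_pos unfolding d_def by blast
  have DiV: "Di u = V" if u: "a < u" "u \<le> b" for u
  proof -
    obtain e where e: "e > 0" "\<forall>u. a < u \<and> u < a + e \<longrightarrow> Di u = V" using V(1) unfolding right_val_def by blast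
    define mm where "mm = min e (u - a)"
    define a' where "a' = a + mm / 2"
    have m: "mm > 0" "mm \<le> e" "mm \<le> u - a" using e u unfolding mm_def by auto
    have a'1: "a < a'" unfolding a'_def using m(1) by linarith
    have a'2: "a' < a + e" unfolding a'_def using m(1,2) by linarith
    have a'3: "a' < u" unfolding a'_def using m(1,3) by linarith
    note a' = a'1 a'2 a'3
    have "Di u = Di a'"
    proof (rule const_lemma[of a' u Di])
      show "a' \<le> u" using a' by simp
      fix t assume "a' \<le> t" "t < u"
      then show "right_val Di t (Di t)" using Di_nochg nod a' u a by auto
    next
      fix t assume "a' < t" "t \<le> u"
      then show "left_val Di t (Di t)" using Di_left a' a by auto
    qed (use a' in auto)
    then show ?thesis using e a' by auto
  qed
  have "\<exists>u0. a < u0 \<and> u0 < a + d \<and> GS u0 = gm V"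
  proof (cases V)
    case DClose
    obtain u where u: "a < u" "u < a + dclose" "\<not> (Di u = DClose \<and> GS u = Opened)" using gate_close[of a] a by (meson less_imp_le)
    have "Di u = DClose" using DiV[of u] u bd DClose by auto
    then have "GS u = Closed" using u(3) by (cases "GS u") auto
    then show ?thesis using u DClose unfolding d_def by auto
  next
    case DOpen
    obtain u where u: "a < u" "u < a + dopen" "\<not> (Di u = DOpen \<and> GS u = Closed)" using gate_open[of a] a by (meson less_imp_le)
    have "Di u = DOpen" using DiV[of u] u bd DOpen by auto
    then have "GS u = Opened" using u(3) by (cases "GS u") auto
    then show ?thesis using u DOpen unfolding d_def by auto
  qed
  then obtain u0 where u0: "a < u0" "u0 < a + d" "GS u0 = gm V" by blast
  have u0b: "u0 \<le> b" using u0 bd unfolding d_def by simp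
  have GSa: "GS a \<noteq> gm V" using g V(2) gm_inj by metis
  have stay: "\<forall>u. u0 \<le> u \<and> u \<le> b \<longrightarrow> GS u = gm V"
    using gs_stay[of u0 b V] u0 u0b a DiV by auto
  have "\<exists>\<delta>. a < \<delta> \<and> \<delta> < u0 \<and> \<delta> \<in> pos_sig GS"
  proof (rule ccontr)
    assume N: "\<not> (\<exists>\<delta>. a < \<delta> \<and> \<delta> < u0 \<and> \<delta> \<in> pos_sig GS)"
    have "GS u0 = GS a"
    proof (rule const_lemma[of a u0 GS])
      show "a \<le> u0" using u0 by simp
      fix t assume t: "a \<le> t" "t < u0"
      show "right_val GS t (GS t)"
      proof (cases "t = a")
        case True then show ?thesis using GS_match[of a] g a by simp
      next
        case False then show ?thesis using GS_nochg[of t] N t a by auto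
      qed
    next
      fix t assume "a < t" "t \<le> u0"
      then show "left_val GS t (GS t)" using GS_left a by auto
    qed (use u0 in auto)
    then show False using u0 GSa by simp
  qed
  then obtain \<delta> where dl: "a < \<delta>" "\<delta> < u0" "\<delta> \<in> pos_sig GS" by blast
  have chg: "GS t \<noteq> gm V \<and> right_val GS t (gm V)" if t: "t \<in> pos_sig GS" "a < t" "t \<le> b" for t
    using GS_chg[OF t(1)] DiV[OF t(2,3)] by simp
  have uniq: "t = \<delta>" if t: "t \<in> pos_sig GS" "a \<le> t" "t \<le> b" for t
  proof -
    have "t \<noteq> a"
    proof
      assume "t = a"
      then show False using GS_chg[OF t(1)] g by simp
    qed
    then have ta: "a < t" using t by simp
    have db: "\<delta> \<le> b" using dl u0b by simp
    show ?thesis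
    proof (rule ccontr)
      assume "t \<noteq> \<delta>"
      then have "\<delta> < t \<or> t < \<delta>" by auto
      then show False
      proof
        assume "\<delta> < t"
        then have "GS t = gm V" using after_rv[of a b V \<delta> t] a DiV chg[OF dl(3) dl(1) db] dl t by auto
        then show False using chg[OF t(1) ta t(3)] by simp
      next
        assume "t < \<delta>"
        then have "GS \<delta> = gm V" using after_rv[of a b V t \<delta>] a DiV chg[OF t(1) ta t(3)] ta t db by auto
        then show False using chg[OF dl(3) dl(1) db] by simp
      qed
    qed
  qed
  have "GS b = gm V" using stay u0b by auto
  moreover have "Di b = V" using DiV[of b] bd d unfolding d_def by simp
  moreover have "\<delta> < a + d" using dl(2) u0(2) by simp
  ultimately show ?thesis unfolding d_def[symmetric]
  proof (intro exI[of _ \<delta>] conjI ballI impI)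
    fix t assume "t \<in> pos_sig GS" "a \<le> t \<and> t \<le> b"
    then show "t = \<delta>" using uniq by blast
  qed (use dl in auto)
qed

lemma between:
  assumes a: "a \<in> pos_sig Di" and g: "GS a = gm (Di a)" and b: "b \<in> pos_sig Di" "a < b"
    and nod: "\<forall>c. a < c \<and> c < b \<longrightarrow> c \<notin> pos_sig Di"
  shows "\<exists>\<delta>. a < \<delta> \<and> \<delta> < b \<and> \<delta> \<in> pos_sig GS \<and>
           (\<forall>t\<in>pos_sig GS. a \<le> t \<and> t \<le> b \<longrightarrow> t = \<delta>) \<and> GS b = gm (Di b)"
proof -
  obtain V where V: "a > 0" "right_val Di a V" "V \<noteq> Di a" using Di_chg[OF a] by blast
  have bd: "a + dd dclose dopen V \<le> b" using next_far[of a V b] V b by auto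
  obtain \<delta> where d: "a < \<delta>" "\<delta> < a + dd dclose dopen V" "\<delta> \<in> pos_sig GS"
    "\<forall>t\<in>pos_sig GS. a \<le> t \<and> t \<le> b \<longrightarrow> t = \<delta>" "GS b = gm V" "Di b = V"
    using window[OF V(1) V(2) V(3) g nod bd] by blast
  have "\<delta> < b" using d(2) bd by linarith
  then show ?thesis using d by metis
qed

lemma tail:
  assumes a: "a \<in> pos_sig Di" and g: "GS a = gm (Di a)"
    and nod: "\<forall>c. a < c \<longrightarrow> c \<notin> pos_sig Di"
  shows "\<exists>\<delta>. a < \<delta> \<and> \<delta> \<in> pos_sig GS \<and> (\<forall>t\<in>pos_sig GS. a \<le> t \<longrightarrow> t = \<delta>)"
proof -
  obtain V where V: "a > 0" "right_val Di a V" "V \<noteq> Di a" using Di_chg[OF a] by blast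
  define b0 where "b0 = a + dd dclose dopen V"
  have nod': "\<forall>c. a < c \<and> c < b \<longrightarrow> c \<notin> pos_sig Di" for b using nod by blast
  obtain \<delta> where dl: "a < \<delta>" "\<delta> < b0" "\<delta> \<in> pos_sig GS"
    using window[OF V(1) V(2) V(3) g nod'[of b0]] unfolding b0_def by blast
  have "t = \<delta>" if t: "t \<in> pos_sig GS" "a \<le> t" for t
  proof -
    define b where "b = max t b0"
    have bb: "a + dd dclose dopen V \<le> b" unfolding b_def b0_def by simp
    obtain \<delta>' where d': "\<forall>t\<in>pos_sig GS. a \<le> t \<and> t \<le> b \<longrightarrow> t = \<delta>'"
      using window[OF V(1) V(2) V(3) g nod'[of b] bb] by blast
    have "\<delta> = \<delta>'" using d' dl unfolding b_def by auto
    moreover have "t = \<delta>'" using d' t unfolding b_def by auto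
    ultimately show ?thesis by simp
  qed
  then show ?thesis using dl by blast
qed

lemma start:
  assumes b: "b \<ge> 0" and nod: "\<forall>c. 0 < c \<and> c < b \<longrightarrow> c \<notin> pos_sig Di"
  shows "GS b = gm (Di b) \<and> (\<forall>t\<in>pos_sig GS. t \<le> b \<longrightarrow> False)"
proof -
  have R0: "right_val Di 0 (Di 0)"
  proof -
    obtain s where s: "right_val r 0 s" using rv_ex by force
    have "dir s = DOpen"
    proof (rule ccontr)
      assume "dir s \<noteq> DOpen"
      then have "dir s = DClose" by (cases "dir s") auto
      then obtain x where x: "x \<in> Tracks" "ereal 0 = DL 0 x"
        using dir_close_step[OF _ s cons_all _ Di0] by force
      then show False using init[OF x(1)] by simp
    qed
    then show ?thesis using Di_rv[OF s] Di0 by simp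
  qed
  have DiO: "Di u = DOpen" if u: "0 \<le> u" "u \<le> b" for u
  proof -
    have "Di u = Di 0"
    proof (rule const_lemma[of 0 b Di])
      fix t assume t: "0 \<le> t" "t < b"
      show "right_val Di t (Di t)"
      proof (cases "t = 0")
        case True then show ?thesis using R0 by simp
      next
        case False then show ?thesis using Di_nochg[of t] nod t by auto
      qed
    next
      fix t assume "0 < t" "t \<le> b"
      then show "left_val Di t (Di t)" using Di_left by auto
    qed (use u b in auto)
    then show ?thesis using Di0 by simp
  qed
  have GSO: "\<forall>u. 0 \<le> u \<and> u \<le> b \<longrightarrow> GS u = gm DOpen"
    using gs_stay[of 0 b DOpen] b DiO GS0 by auto
  have "False" if t: "t \<in> pos_sig GS" "t \<le> b" for t
  proof -
    have "t > 0" "GS t \<noteq> gm (Di t)" using GS_chg[OF t(1)] by auto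
    then show False using GSO DiO t by auto
  qed
  then show ?thesis using GSO DiO b by auto
qed

end

context rrun begin

lemma part1:
  assumes sm: "strict_mono (\<gamma>::nat \<Rightarrow> real)" and rg: "range \<gamma> = pos_sig Di"
  shows "\<exists>\<delta>. strict_mono \<delta> \<and> range \<delta> = pos_sig GS \<and> (\<forall>i. \<gamma> i < \<delta> i \<and> \<delta> i < \<gamma> (Suc i))"
proof -
  have inP: "\<gamma> i \<in> pos_sig Di" for i using rg by blast
  have gap: "\<forall>c. \<gamma> i < c \<and> c < \<gamma> (Suc i) \<longrightarrow> c \<notin> pos_sig Di" for i
  proof (intro allI impI notI)
    fix c assume c: "\<gamma> i < c \<and> c < \<gamma> (Suc i)" "c \<in> pos_sig Di"
    then obtain j where j: "c = \<gamma> j" using rg by blast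
    have "i < j" using c(1) j sm by (metis strict_mono_less)
    moreover have "j < Suc i" using c(1) j sm by (metis strict_mono_less)
    ultimately show False by simp
  qed
  have gap0: "\<forall>c. 0 < c \<and> c < \<gamma> 0 \<longrightarrow> c \<notin> pos_sig Di"
  proof (intro allI impI notI)
    fix c assume c: "0 < c \<and> c < \<gamma> 0" "c \<in> pos_sig Di"
    then obtain j where j: "c = \<gamma> j" using rg by blast
    have "j < 0" using c(1) j sm by (metis strict_mono_less)
    then show False by simp
  qed
  have g0: "\<gamma> 0 > 0" using inP[of 0] unfolding pos_sig_def by auto
  have INV: "GS (\<gamma> i) = gm (Di (\<gamma> i))" for i
  proof (induction i)
    case 0 show ?case using start[of "\<gamma> 0"] g0 gap0 by simp
  next
    case (Suc i)
    have "\<gamma> i < \<gamma> (Suc i)" using sm by (simp add: strict_mono_Suc_iff)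
    then show ?case using between[OF inP Suc inP] gap by blast
  qed
  have B: "\<exists>\<delta>. \<gamma> i < \<delta> \<and> \<delta> < \<gamma> (Suc i) \<and> \<delta> \<in> pos_sig GS \<and>
             (\<forall>t\<in>pos_sig GS. \<gamma> i \<le> t \<and> t \<le> \<gamma> (Suc i) \<longrightarrow> t = \<delta>)" for i
  proof -
    have "\<gamma> i < \<gamma> (Suc i)" using sm by (simp add: strict_mono_Suc_iff)
    then show ?thesis using between[OF inP INV inP] gap by blast
  qed
  define \<delta> where "\<delta> i = (SOME \<delta>. \<gamma> i < \<delta> \<and> \<delta> < \<gamma> (Suc i) \<and> \<delta> \<in> pos_sig GS \<and>
             (\<forall>t\<in>pos_sig GS. \<gamma> i \<le> t \<and> t \<le> \<gamma> (Suc i) \<longrightarrow> t = \<delta>))" for i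
  have D: "\<gamma> i < \<delta> i \<and> \<delta> i < \<gamma> (Suc i) \<and> \<delta> i \<in> pos_sig GS \<and>
             (\<forall>t\<in>pos_sig GS. \<gamma> i \<le> t \<and> t \<le> \<gamma> (Suc i) \<longrightarrow> t = \<delta> i)" for i
    unfolding \<delta>_def by (rule someI_ex[OF B])
  have smd: "strict_mono \<delta>" unfolding strict_mono_Suc_iff
  proof
    fix i show "\<delta> i < \<delta> (Suc i)" using D[of i] D[of "Suc i"] by linarith
  qed
  have "range \<delta> = pos_sig GS"
  proof
    show "range \<delta> \<subseteq> pos_sig GS" using D by blast
  next
    show "pos_sig GS \<subseteq> range \<delta>"
    proof
      fix t assume t: "t \<in> pos_sig GS"
      have t0: "t > 0" using t unfolding pos_sig_def by auto
      have gt: "\<gamma> 0 < t"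
      proof (rule ccontr)
        assume "\<not> \<gamma> 0 < t"
        then show False using start[of "\<gamma> 0"] g0 gap0 t by auto
      qed
      have ex: "\<exists>m. t \<le> \<gamma> m"
      proof (rule ccontr)
        assume "\<not> (\<exists>m. t \<le> \<gamma> m)"
        then have "range \<gamma> \<subseteq> {..<t}" by (auto simp: not_le)
        then have "range \<gamma> \<subseteq> pos_sig Di \<inter> {..<t}" using rg by blast
        then have "finite (range \<gamma>)" using finite_sig[OF t0] by (rule finite_subset)
        then have "finite (UNIV :: nat set)" using finite_imageD strict_mono_imp_inj_on[OF sm] by blast
        then show False by simp
      qed
      obtain m where m: "t \<le> \<gamma> m" "\<forall>k<m. \<not> t \<le> \<gamma> k"
        using exists_least_iff[THEN iffD1, OF ex] by blast
      have "m \<noteq> 0"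
      proof
        assume "m = 0" then show False using m(1) gt by simp
      qed
      then obtain i where i: "m = Suc i" by (cases m) auto
      have "\<gamma> i < t" using m(2) i by (simp add: not_le)
      then have "t = \<delta> i" using D[of i] t m(1) i by auto
      then show "t \<in> range \<delta>" by simp
    qed
  qed
  then show ?thesis using smd D by blast
qed

lemma part2:
  assumes mo: "\<forall>i j. i < j \<and> j < n \<longrightarrow> (\<gamma>::nat \<Rightarrow> real) i < \<gamma> j" and rg: "\<gamma> ` {..<n} = pos_sig Di"
  shows "\<exists>\<delta>::nat \<Rightarrow> real. (\<forall>i j. i < j \<and> j < n \<longrightarrow> \<delta> i < \<delta> j) \<and> \<delta> ` {..<n} = pos_sig GS \<and>
                  (\<forall>i. Suc i < n \<longrightarrow> \<gamma> i < \<delta> i \<and> \<delta> i < \<gamma> (Suc i)) \<and>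
                  (0 < n \<longrightarrow> \<gamma> (n - 1) < \<delta> (n - 1))"
proof (cases "n = 0")
  case True
  then have E: "pos_sig Di = {}" using rg by simp
  have "pos_sig GS = {}"
  proof (rule ccontr)
    assume "pos_sig GS \<noteq> {}"
    then obtain t where t: "t \<in> pos_sig GS" by blast
    then have "t > 0" unfolding pos_sig_def by auto
    then show False using start[of t] E t by auto
  qed
  then show ?thesis using True by auto
next
  case False
  then have n0: "0 < n" by simp
  have inP: "i < n \<Longrightarrow> \<gamma> i \<in> pos_sig Di" for i using rg by blast
  have le: "\<gamma> i \<le> \<gamma> j" if "i \<le> j" "j < n" for i j
    using mo that by (cases "i = j") (auto simp: less_le)
  have lt_iff: "\<gamma> i < \<gamma> j \<Longrightarrow> i < n \<Longrightarrow> j < n \<Longrightarrow> i < j" for i j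
    using le[of j i] by (meson not_le)
  have gap: "\<forall>c. \<gamma> i < c \<and> c < \<gamma> (Suc i) \<longrightarrow> c \<notin> pos_sig Di" if si: "Suc i < n" for i
  proof (intro allI impI notI)
    fix c assume c: "\<gamma> i < c \<and> c < \<gamma> (Suc i)" "c \<in> pos_sig Di"
    then obtain j where j: "c = \<gamma> j" "j < n" using rg by auto
    have "i < j" using c(1) j si lt_iff[of i j] by auto
    moreover have "j < Suc i" using c(1) j si lt_iff[of j "Suc i"] by auto
    ultimately show False by simp
  qed
  have gapT: "\<forall>c. \<gamma> (n - 1) < c \<longrightarrow> c \<notin> pos_sig Di"
  proof (intro allI impI notI)
    fix c assume c: "\<gamma> (n - 1) < c" "c \<in> pos_sig Di"
    then obtain j where j: "c = \<gamma> j" "j < n" using rg by auto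
    have "n - 1 < j" using c(1) j n0 lt_iff[of "n - 1" j] by auto
    then show False using j by simp
  qed
  have gap0: "\<forall>c. 0 < c \<and> c < \<gamma> 0 \<longrightarrow> c \<notin> pos_sig Di"
  proof (intro allI impI notI)
    fix c assume c: "0 < c \<and> c < \<gamma> 0" "c \<in> pos_sig Di"
    then obtain j where j: "c = \<gamma> j" "j < n" using rg by auto
    have "j < 0" using c(1) j n0 lt_iff[of j 0] by auto
    then show False by simp
  qed
  have g0: "\<gamma> 0 > 0" using inP[OF n0] unfolding pos_sig_def by auto
  have INV: "i < n \<Longrightarrow> GS (\<gamma> i) = gm (Di (\<gamma> i))" for i
  proof (induction i)
    case 0 show ?case using start[of "\<gamma> 0"] g0 gap0 by simp
  next
    case (Suc i)
    have i: "i < n" using Suc.prems by simp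
    have IH: "GS (\<gamma> i) = gm (Di (\<gamma> i))" using Suc.IH i by blast
    have "\<gamma> i < \<gamma> (Suc i)" using mo Suc.prems by simp
    from between[OF inP[OF i] IH inP[OF Suc.prems] this gap[OF Suc.prems]] show ?case by blast
  qed
  define Q where "Q i d \<longleftrightarrow> \<gamma> i < d \<and> d \<in> pos_sig GS \<and>
     (Suc i < n \<longrightarrow> d < \<gamma> (Suc i) \<and> (\<forall>t\<in>pos_sig GS. \<gamma> i \<le> t \<and> t \<le> \<gamma> (Suc i) \<longrightarrow> t = d)) \<and>
     (Suc i = n \<longrightarrow> (\<forall>t\<in>pos_sig GS. \<gamma> i \<le> t \<longrightarrow> t = d))" for i d
  have EQ: "\<exists>d. Q i d" if i: "i < n" for i
  proof (cases "Suc i < n")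
    case True
    have "\<gamma> i < \<gamma> (Suc i)" using mo True by simp
    then obtain d where d: "\<gamma> i < d" "d < \<gamma> (Suc i)" "d \<in> pos_sig GS"
       "\<forall>t\<in>pos_sig GS. \<gamma> i \<le> t \<and> t \<le> \<gamma> (Suc i) \<longrightarrow> t = d"
      using between[OF inP[OF i] INV[OF i] inP[OF True] _ gap[OF True]] by blast
    have ne: "Suc i \<noteq> n" using True by simp
    have "Q i d" unfolding Q_def using d True ne by blast
    then show ?thesis by blast
  next
    case False
    then have ni: "n - 1 = i" "Suc i = n" using i by auto
    have gT: "\<forall>c. \<gamma> i < c \<longrightarrow> c \<notin> pos_sig Di" using gapT ni(1) by simp
    obtain d where d: "\<gamma> i < d" "d \<in> pos_sig GS" "\<forall>t\<in>pos_sig GS. \<gamma> i \<le> t \<longrightarrow> t = d"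
      using tail[OF inP[OF i] INV[OF i] gT] by blast
    have ne: "\<not> Suc i < n" using ni(2) by simp
    have "Q i d" unfolding Q_def using d ni(2) ne by blast
    then show ?thesis by blast
  qed
  define \<delta> where "\<delta> i = (SOME d. Q i d)" for i
  have D: "i < n \<Longrightarrow> Q i (\<delta> i)" for i unfolding \<delta>_def using EQ someI_ex by metis
  have mono: "\<forall>i j. i < j \<and> j < n \<longrightarrow> \<delta> i < \<delta> j"
  proof (intro allI impI)
    fix i j assume ij: "i < j \<and> j < n"
    then have "Suc i < n" by simp
    then have "\<delta> i < \<gamma> (Suc i)" using D[of i] unfolding Q_def by auto
    moreover have "\<gamma> (Suc i) \<le> \<gamma> j" using le ij by simp
    moreover have "\<gamma> j < \<delta> j" using D[of j] ij unfolding Q_def by auto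
    ultimately show "\<delta> i < \<delta> j" by simp
  qed
  have img: "\<delta> ` {..<n} = pos_sig GS"
  proof
    show "\<delta> ` {..<n} \<subseteq> pos_sig GS" using D unfolding Q_def by auto
  next
    show "pos_sig GS \<subseteq> \<delta> ` {..<n}"
    proof
      fix t assume t: "t \<in> pos_sig GS"
      have gt: "\<gamma> 0 < t"
      proof (rule ccontr)
        assume "\<not> \<gamma> 0 < t"
        then show False using start[of "\<gamma> 0"] g0 gap0 t by auto
      qed
      show "t \<in> \<delta> ` {..<n}"
      proof (cases "\<gamma> (n - 1) < t")
        case True
        have "Q (n - 1) (\<delta> (n - 1))" using D n0 by simp
        then have "t = \<delta> (n - 1)" unfolding Q_def using True t n0 by auto
        then show ?thesis using n0 by auto
      next
        case False
        then have ex: "\<exists>m. t \<le> \<gamma> m \<and> m < n" using n0 by (intro exI[of _ "n - 1"]) auto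
        obtain m where m: "t \<le> \<gamma> m \<and> m < n" "\<forall>k<m. \<not> (t \<le> \<gamma> k \<and> k < n)"
          using exists_least_iff[THEN iffD1, OF ex] by blast
        have "m \<noteq> 0"
      proof
        assume "m = 0" then show False using m(1) gt by simp
      qed
        then obtain i where i: "m = Suc i" by (cases m) auto
        have "\<gamma> i < t" using m i by (auto simp: not_le)
        moreover have "Q i (\<delta> i)" using D m i by simp
        ultimately have "t = \<delta> i" unfolding Q_def using t m i by auto
        then show ?thesis using m i by auto
      qed
    qed
  qed
  have "\<forall>i. Suc i < n \<longrightarrow> \<gamma> i < \<delta> i \<and> \<delta> i < \<gamma> (Suc i)" using D unfolding Q_def by auto
  moreover have "\<gamma> (n - 1) < \<delta> (n - 1)" using D[of "n - 1"] n0 unfolding Q_def by auto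
  ultimately show ?thesis using mono img by blast
qed

end

theorem mainTheorem14:
  fixes Tracks :: "'tr set" and dclose dopen dmin dmax :: real
    and TS :: "real \<Rightarrow> 'tr \<Rightarrow> tstat" and DL :: "real \<Rightarrow> 'tr \<Rightarrow> ereal"
    and Di :: "real \<Rightarrow> dirv" and GS :: "real \<Rightarrow> gstat"
  assumes "finite Tracks"
    and "0 < dclose" and "0 < dopen" and "0 < dmin" and "0 < dmax"
    and "dclose < dmin" and "dmin \<le> dmax"
    and "dmin \<ge> dclose + dopen"
    and "regular_run Tracks dclose dopen dmin dmax TS DL Di GS"
    and "Di 0 = DOpen" and "GS 0 = Opened"
  shows "(\<forall>\<gamma>. strict_mono \<gamma> \<and> range \<gamma> = pos_sig Di \<longrightarrow>
            (\<exists>\<delta>. strict_mono \<delta> \<and> range \<delta> = pos_sig GS \<and>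
                  (\<forall>i. \<gamma> i < \<delta> i \<and> \<delta> i < \<gamma> (Suc i)))) \<and>
         (\<forall>(\<gamma>::nat \<Rightarrow> real) n. (\<forall>i j. i < j \<and> j < n \<longrightarrow> \<gamma> i < \<gamma> j) \<and> \<gamma> ` {..<n} = pos_sig Di \<longrightarrow>
            (\<exists>\<delta>::nat \<Rightarrow> real. (\<forall>i j. i < j \<and> j < n \<longrightarrow> \<delta> i < \<delta> j) \<and> \<delta> ` {..<n} = pos_sig GS \<and>
                  (\<forall>i. Suc i < n \<longrightarrow> \<gamma> i < \<delta> i \<and> \<delta> i < \<gamma> (Suc i)) \<and>
                  (0 < n \<longrightarrow> \<gamma> (n - 1) < \<delta> (n - 1))))"
proof -
  interpret rrun Tracks dclose dopen dmin dmax TS DL Di GS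
    using assms by unfold_locales auto
  show ?thesis
  proof (intro conjI allI impI)
    fix \<gamma> :: "nat \<Rightarrow> real"
    assume h: "strict_mono \<gamma> \<and> range \<gamma> = pos_sig Di"
    show "\<exists>\<delta>. strict_mono \<delta> \<and> range \<delta> = pos_sig GS \<and> (\<forall>i. \<gamma> i < \<delta> i \<and> \<delta> i < \<gamma> (Suc i))"
      by (rule part1[OF conjunct1[OF h] conjunct2[OF h]])
  next
    fix \<gamma> :: "nat \<Rightarrow> real" and n :: nat
    assume h: "(\<forall>i j. i < j \<and> j < n \<longrightarrow> \<gamma> i < \<gamma> j) \<and> \<gamma> ` {..<n} = pos_sig Di"
    show "\<exists>\<delta>::nat \<Rightarrow> real. (\<forall>i j. i < j \<and> j < n \<longrightarrow> \<delta> i < \<delta> j) \<and> \<delta> ` {..<n} = pos_sig GS \<and>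
                  (\<forall>i. Suc i < n \<longrightarrow> \<gamma> i < \<delta> i \<and> \<delta> i < \<gamma> (Suc i)) \<and>
                  (0 < n \<longrightarrow> \<gamma> (n - 1) < \<delta> (n - 1))"
      by (rule part2[OF conjunct1[OF h] conjunct2[OF h]])
  qed
qed

end
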